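(* Consider a discrete-time last-come-first-serve (LCFS) G/G/1 queue with preemptive service: update packets are generated according to a renewal process whose inter-generation times are i.i.d. positive-integer-valued random variables distributed as $X$, and packet service times are i.i.d. positive-integer-valued random variables distributed as $S$, independent of the generation process. A newly generated packet immediately enters service, preempting (and discarding) any packet currently in service. Assume $\mathbb{P}(S\le X)>0$, where $X$ and $S$ are independent. Then the peak and average age are $$A^{\mathrm{p}} = \frac{\mathbb{E}[X]}{\mathbb{P}(S\le X)} + \frac{\mathbb{E}[S\,\mathbb{1}_{\{S\le X\}}]}{\mathbb{P}(S\le X)} - 1,$$ and $$A^{\mathrm{ave}} = \frac{1}{2}\frac{\mathbb{E}[X^2]}{\mathbb{E}[X]} + \frac{\mathbb{E}[\min(X,S)]}{\mathbb{P}(S\le X)} - \frac{1}{2}.$$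
   Context: Time is slotted. Packets are generated (arrive) at the beginning of a time slot and finish service at the end of a time slot: a packet generated at the beginning of slot $Z$ with service time $S$ completes service at the end of slot $Z+S-1$ unless a new packet is generated at or before slot $Z+S-1$ (i.e., it completes iff its service time is at most the time until the next generation). The age process $A(t)$ is the age of information at the beginning of slot $t$; if the $i$th packet is generated at time $Y_i$, then $A(t+1)=A(t)+1$ if no packet completes service in slot $t$, and $A(t+1)=\min\{t-Y_i, A(t)\}+1$ if packet $i$ completes service in slot $t$. The peak age is $A^{\mathrm{p}}=\limsup_{T\to\infty}\frac{\sum_{t=1}^{T}A(t)\mathbb{1}_{\{A(t+1)\le A(t)\}}}{\sum_{t=1}^{T}\mathbb{1}_{\{A(t+1)\le A(t)\}}}$ and the average age is $A^{\mathrm{ave}}=\limsup_{T\to\infty}\frac{1}{T}\sum_{t=1}^{T}A(t)$. *)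

theory Defs
  imports "HOL-Probability.Probability"
begin

text \<open>Deterministic sample-path description of the slotted preemptive LCFS G/G/1 queue.
  xs i : inter-generation time between packet i and packet i+1 (i = 0,1,2,...)
  ss i : service time of packet i.
  Packet 0 is generated at the beginning of slot 1.\<close>

definition gen_time :: "(nat \<Rightarrow> nat) \<Rightarrow> nat \<Rightarrow> nat" where
  "gen_time xs i = 1 + (\<Sum>k<i. xs k)"

text \<open>Packet i completes service in slot t: its service time is at most the time
  until the next generation, and it finishes at the end of slot Y_i + S_i - 1.\<close>
definition completes_in :: "(nat \<Rightarrow> nat) \<Rightarrow> (nat \<Rightarrow> nat) \<Rightarrow> nat \<Rightarrow> nat \<Rightarrow> bool" where
  "completes_in xs ss i t \<longleftrightarrow> ss i \<le> xs i \<and> gen_time xs i + ss i - 1 = t"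

text \<open>Age at the beginning of slot t (slot 0 is a dummy with A(0)=0, so A(1)=1).\<close>
fun age :: "(nat \<Rightarrow> nat) \<Rightarrow> (nat \<Rightarrow> nat) \<Rightarrow> nat \<Rightarrow> nat" where
  "age xs ss 0 = 0"
| "age xs ss (Suc t) =
     (if \<exists>i. completes_in xs ss i t
      then min (t - gen_time xs (THE i. completes_in xs ss i t)) (age xs ss t) + 1
      else age xs ss t + 1)"

definition peak_ratio :: "(nat \<Rightarrow> nat) \<Rightarrow> (nat \<Rightarrow> nat) \<Rightarrow> nat \<Rightarrow> real" where
  "peak_ratio xs ss T =
     (\<Sum>t=1..T. if age xs ss (Suc t) \<le> age xs ss t then real (age xs ss t) else 0) /
     (\<Sum>t=1..T. if age xs ss (Suc t) \<le> age xs ss t then 1 else 0)"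

definition peak_age :: "(nat \<Rightarrow> nat) \<Rightarrow> (nat \<Rightarrow> nat) \<Rightarrow> ereal" where
  "peak_age xs ss = limsup (\<lambda>T. ereal (peak_ratio xs ss T))"

definition average_age :: "(nat \<Rightarrow> nat) \<Rightarrow> (nat \<Rightarrow> nat) \<Rightarrow> ereal" where
  "average_age xs ss = limsup (\<lambda>T. ereal ((\<Sum>t=1..T. real (age xs ss t)) / real T))"

end

theory Submission
  imports Defs
begin

fun afun :: "(nat \<Rightarrow> nat) \<Rightarrow> (nat \<Rightarrow> nat) \<Rightarrow> nat \<Rightarrow> nat" where
  "afun xs ss 0 = 1"
| "afun xs ss (Suc n) = xs n + (if ss n \<le> xs n then 0 else afun xs ss n)"

locale sp =
  fixes xs ss :: "nat \<Rightarrow> nat"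
  assumes xpos: "\<And>k. 1 \<le> xs k" and spos: "\<And>k. 1 \<le> ss k"
begin

abbreviation Y where "Y \<equiv> gen_time xs"
definition cpl where "cpl i = gen_time xs i + ss i - 1"
abbreviation sc where "sc i \<equiv> ss i \<le> xs i"

definition Lfull where
  "Lfull t = Max (insert 0 (Y ` {i. sc i \<and> cpl i < t}))"

lemma Y_Suc: "Y (Suc i) = Y i + xs i"
  by (simp add: gen_time_def)

lemma Y_ge: "i + 1 \<le> Y i"
proof (induction i)
  case 0 then show ?case by (simp add: gen_time_def)
next
  case (Suc i) then show ?case using Y_Suc[of i] xpos[of i] by simp
qed

lemma Y_mono_Suc: "i < j \<Longrightarrow> Y (Suc i) \<le> Y j"
proof (induction j)
  case 0 then show ?case by simp
next
  case (Suc j)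
  then show ?case using Y_Suc[of j] by (cases "i = j") auto
qed

lemma Y_strict: "i < j \<Longrightarrow> Y i < Y j"
  using Y_mono_Suc[of i j] Y_Suc[of i] xpos[of i] by simp

lemma Y_mono: "i \<le> j \<Longrightarrow> Y i \<le> Y j"
  using Y_strict[of i j] by (cases "i = j") auto

lemma Y_pos: "1 \<le> Y i" using Y_ge[of i] by simp

lemma cpl_ge: "Y i \<le> cpl i"
  using spos[of i] by (simp add: cpl_def)

lemma cpl_lt: "sc i \<Longrightarrow> cpl i < Y (Suc i)"
  using spos[of i] Y_Suc[of i] Y_pos[of i] by (simp add: cpl_def)

lemma cpl_less_imp: "sc i \<Longrightarrow> sc j \<Longrightarrow> cpl i < cpl j \<Longrightarrow> i < j"
proof (rule ccontr)
  assume a: "sc i" "sc j" "cpl i < cpl j" "\<not> i < j"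
  then have "j < i" using a by (cases "i = j") auto
  then have "cpl j < Y i" using cpl_lt[of j] Y_mono_Suc[of j i] a by simp
  then show False using cpl_ge[of i] a by simp
qed

lemma cpl_mono: "sc i \<Longrightarrow> sc j \<Longrightarrow> i \<le> j \<Longrightarrow> cpl i \<le> cpl j"
  using cpl_less_imp[of j i] by (cases "cpl i \<le> cpl j") auto

lemma completes_iff: "completes_in xs ss i t \<longleftrightarrow> sc i \<and> cpl i = t"
  by (simp add: completes_in_def cpl_def)

lemma cpl_strict: "sc i \<Longrightarrow> i < j \<Longrightarrow> cpl i < cpl j"
  using cpl_lt[of i] Y_mono_Suc[of i j] cpl_ge[of j] by simp

lemma completes_unique: "completes_in xs ss i t \<Longrightarrow> completes_in xs ss j t \<Longrightarrow> i = j"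
  unfolding completes_iff using cpl_strict[of i j] cpl_strict[of j i]
  by (metis less_irrefl linorder_neqE_nat)

lemma the_completes: "completes_in xs ss i t \<Longrightarrow> (THE i. completes_in xs ss i t) = i"
  using completes_unique by blast

lemma fin_set: "finite {i. sc i \<and> cpl i < t}"
proof (rule finite_subset)
  show "{i. sc i \<and> cpl i < t} \<subseteq> {..<t}"
    using Y_ge cpl_ge by (auto, metis add_lessD1 le_trans less_le_trans not_le)
qed simp

lemma Lfull_le_iff: "Lfull t \<le> b \<longleftrightarrow> (\<forall>i. sc i \<and> cpl i < t \<longrightarrow> Y i \<le> b)"
  unfolding Lfull_def using fin_set[of t] by (subst Max_le_iff) auto

lemma Lfull_ge: "sc i \<Longrightarrow> cpl i < t \<Longrightarrow> Y i \<le> Lfull t"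
  unfolding Lfull_def using fin_set[of t] by (intro Max_ge) auto

lemma Lfull_le_t: "Lfull t \<le> t"
  unfolding Lfull_le_iff using cpl_ge by (meson le_trans less_imp_le)

lemma Lfull_Suc_compl:
  assumes "sc i" "cpl i = t"
  shows "Lfull (Suc t) = Y i" and "Lfull t < Y i"
proof -
  have "\<forall>j. sc j \<and> cpl j < Suc t \<longrightarrow> Y j \<le> Y i"
  proof (intro allI impI)
    fix j assume j: "sc j \<and> cpl j < Suc t"
    show "Y j \<le> Y i"
    proof (cases "cpl j = t")
      case True then show ?thesis using completes_unique[of j t i] assms j by (simp add: completes_iff)
    next
      case False then show ?thesis using j assms cpl_less_imp[of j i] Y_mono[of j i] by auto
    qed
  qed
  then have "Lfull (Suc t) \<le> Y i" using Lfull_le_iff by blast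
  moreover have "Y i \<le> Lfull (Suc t)" using assms by (intro Lfull_ge) auto
  ultimately show "Lfull (Suc t) = Y i" by simp
  have "\<forall>j. sc j \<and> cpl j < t \<longrightarrow> Y j \<le> Y i - 1"
    using assms cpl_less_imp[of _ i] Y_strict by (metis Suc_pred' Y_pos less_Suc_eq_le less_le_trans zero_less_one)
  then have "Lfull t \<le> Y i - 1" using Lfull_le_iff by blast
  then show "Lfull t < Y i" using Y_pos[of i] by simp
qed

lemma Lfull_Suc_nocompl:
  assumes "\<not> (\<exists>i. completes_in xs ss i t)"
  shows "Lfull (Suc t) = Lfull t"
proof -
  have "{i. sc i \<and> cpl i < Suc t} = {i. sc i \<and> cpl i < t}"
    using assms by (auto simp: completes_iff less_Suc_eq)
  then show ?thesis by (simp add: Lfull_def)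
qed

lemma age_eq: "age xs ss t = t - Lfull t"
proof (induction t)
  case 0
  then show ?case by simp
next
  case (Suc t)
  show ?case
  proof (cases "\<exists>i. completes_in xs ss i t")
    case True
    then obtain i where i: "completes_in xs ss i t" by blast
    then have sc: "sc i" "cpl i = t" by (auto simp: completes_iff)
    have "Y i \<le> t" using cpl_ge[of i] sc by simp
    then show ?thesis using Lfull_Suc_compl[OF sc] Suc True the_completes[OF i] by auto
  next
    case False
    then show ?thesis using Suc Lfull_Suc_nocompl[OF False] Lfull_le_t[of t] by simp
  qed
qed

lemma peak_iff: "age xs ss (Suc t) \<le> age xs ss t \<longleftrightarrow> (\<exists>i. completes_in xs ss i t)"
proof (cases "\<exists>i. completes_in xs ss i t")
  case True
  then obtain i where i: "completes_in xs ss i t" by blast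
  then have sc: "sc i" "cpl i = t" by (auto simp: completes_iff)
  have "Y i \<le> t" using cpl_ge[of i] sc by simp
  then show ?thesis using Lfull_Suc_compl[OF sc] True age_eq[of t] age_eq[of "Suc t"] by auto
next
  case False
  then show ?thesis using Lfull_Suc_nocompl[OF False] Lfull_le_t[of t] age_eq[of t] age_eq[of "Suc t"] by auto
qed

definition CT where "CT T = {i. sc i \<and> cpl i \<le> T}"

lemma CT_fin: "finite (CT T)"
  using fin_set[of "Suc T"] unfolding CT_def by (rule rev_finite_subset) auto

lemma Lfull_CT: "Lfull (Suc T) = Max (insert 0 (Y ` CT T))"
  unfolding Lfull_def CT_def by (simp add: less_Suc_eq_le)

lemma Lfull_1: "Lfull (Suc 0) = 0"
  using Lfull_le_t[of "Suc 0"] Lfull_le_iff[of "Suc 0" 0] cpl_ge Y_pos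
  by (metis le_antisym le_zero_eq less_Suc0 not_one_le_zero)

lemma peak_sums:
  "(\<Sum>t=1..T. if age xs ss (Suc t) \<le> age xs ss t then real (age xs ss t) else 0)
     = real (Lfull (Suc T)) + (\<Sum>i\<in>CT T. real (ss i) - 1)
   \<and> (\<Sum>t=1..T. if age xs ss (Suc t) \<le> age xs ss t then (1::real) else 0) = real (card (CT T))"
proof (induction T)
  case 0
  have "\<And>i. 1 \<le> cpl i" using cpl_ge Y_pos le_trans by blast
  then have "CT 0 = {}" unfolding CT_def by (metis (no_types, lifting) empty_Collect_eq le_zero_eq not_one_le_zero)
  then show ?case using Lfull_1 by simp
next
  case (Suc T)
  show ?case
  proof (cases "\<exists>i. completes_in xs ss i (Suc T)")
    case True
    then obtain i where i: "completes_in xs ss i (Suc T)" by blast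
    then have sc: "sc i" "cpl i = Suc T" by (auto simp: completes_iff)
    have CTS: "CT (Suc T) = insert i (CT T)" and ni: "i \<notin> CT T"
      using sc completes_unique by (auto simp: CT_def le_Suc_eq completes_iff)
    have Yi: "Y i \<le> Suc T" using cpl_ge[of i] sc by simp
    have "Y i + ss i = Suc T + 1" using sc spos[of i] by (simp add: cpl_def)
    then have "real (Y i + ss i) = real (Suc T + 1)" by (simp only:)
    then have ssi: "real (ss i) - 1 = real (Suc T) - real (Y i)" by simp
    have ag: "age xs ss (Suc T) = Suc T - Lfull (Suc T)" by (rule age_eq)
    have pk: "age xs ss (Suc (Suc T)) \<le> age xs ss (Suc T)" using peak_iff True by blast
    have L2: "Lfull (Suc (Suc T)) = Y i" using Lfull_Suc_compl[OF sc] by simp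
    have L1: "Lfull (Suc T) \<le> Suc T" by (rule Lfull_le_t)
    have "real (age xs ss (Suc T)) = real (Suc T) - real (Lfull (Suc T))" using ag L1 by simp
    then show ?thesis using Suc.IH pk L2 ssi CTS ni CT_fin[of T] by simp
  next
    case False
    have CTS: "CT (Suc T) = CT T" using False by (auto simp: CT_def le_Suc_eq completes_iff)
    have pk: "\<not> age xs ss (Suc (Suc T)) \<le> age xs ss (Suc T)" using peak_iff False by blast
    show ?thesis using Suc.IH pk CTS Lfull_Suc_nocompl[OF False] by simp
  qed
qed

lemma CT_Max:
  assumes "CT T \<noteq> {}"
  shows "CT T = {i. i \<le> Max (CT T) \<and> sc i}" and "Lfull (Suc T) = Y (Max (CT T))"
proof -
  let ?l = "Max (CT T)"
  have l: "?l \<in> CT T" using assms CT_fin by (rule Max_in[rotated])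
  show "CT T = {i. i \<le> ?l \<and> sc i}"
  proof
    show "CT T \<subseteq> {i. i \<le> ?l \<and> sc i}" using CT_fin by (auto simp: CT_def)
    show "{i. i \<le> ?l \<and> sc i} \<subseteq> CT T" using l cpl_mono by (auto simp: CT_def intro: le_trans)
  qed
  have "Lfull (Suc T) \<le> Y ?l" unfolding Lfull_le_iff
    using CT_fin Y_mono by (auto simp: CT_def less_Suc_eq_le)
  moreover have "Y ?l \<le> Lfull (Suc T)" using l by (intro Lfull_ge) (auto simp: CT_def)
  ultimately show "Lfull (Suc T) = Y ?l" by simp
qed

definition qpk where
  "qpk l = (real (Y l) + (\<Sum>i<Suc l. if sc i then real (ss i) else 0) - (\<Sum>i<Suc l. if sc i then 1 else 0))
           / (\<Sum>i<Suc l. if sc i then 1 else 0)"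

lemma peak_ratio_qpk:
  assumes "CT T \<noteq> {}"
  shows "peak_ratio xs ss T = qpk (Max (CT T))"
proof -
  let ?l = "Max (CT T)"
  have e: "{i. i \<le> ?l \<and> sc i} = {i\<in>{..<Suc ?l}. sc i}" by auto
  have "(\<Sum>i\<in>CT T. real (ss i) - 1) = (\<Sum>i\<in>{i\<in>{..<Suc ?l}. sc i}. real (ss i) - 1)"
    by (subst CT_Max(1)[OF assms], subst e) (rule refl)
  also have "\<dots> = (\<Sum>i<Suc ?l. if sc i then real (ss i) - 1 else 0)"
    by (rule sum.inter_filter) simp
  also have "\<dots> = (\<Sum>i<Suc ?l. (if sc i then real (ss i) else 0) - (if sc i then 1 else 0))"
    by (rule sum.cong) auto
  also have "\<dots> = (\<Sum>i<Suc ?l. if sc i then real (ss i) else 0) - (\<Sum>i<Suc ?l. if sc i then 1 else 0)"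
    by (rule sum_subtractf)
  finally have s1: "(\<Sum>i\<in>CT T. real (ss i) - 1) = (\<Sum>i<Suc ?l. if sc i then real (ss i) else 0) - (\<Sum>i<Suc ?l. if sc i then 1 else 0)" .
  have "real (card (CT T)) = (\<Sum>i\<in>{i\<in>{..<Suc ?l}. sc i}. 1)"
    by (subst CT_Max(1)[OF assms], subst e) simp
  also have "\<dots> = (\<Sum>i<Suc ?l. if sc i then 1 else 0)"
    by (rule sum.inter_filter) simp
  finally have s2: "real (card (CT T)) = (\<Sum>i<Suc ?l. if sc i then 1 else 0)" .
  show ?thesis unfolding peak_ratio_def using peak_sums[of T] CT_Max(2)[OF assms] s1 s2
    by (simp add: qpk_def)
qed

lemma peak_limit:
  assumes inf: "\<And>K. \<exists>i\<ge>K. sc i" and q: "qpk \<longlonglongrightarrow> Lp"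
  shows "peak_ratio xs ss \<longlonglongrightarrow> Lp"
proof -
  obtain i0 where i0: "sc i0" using inf by blast
  have ev: "eventually (\<lambda>T. CT T \<noteq> {}) sequentially"
    using i0 unfolding eventually_sequentially by (intro exI[of _ "cpl i0"]) (auto simp: CT_def)
  have lim: "filterlim (\<lambda>T. Max (CT T)) at_top sequentially"
    unfolding filterlim_at_top eventually_sequentially
  proof
    fix K
    obtain i where i: "i \<ge> K" "sc i" using inf by blast
    show "\<exists>N. \<forall>T\<ge>N. K \<le> Max (CT T)"
    proof (intro exI allI impI)
      fix T assume "cpl i \<le> T"
      then have "i \<in> CT T" using i by (simp add: CT_def)
      then show "K \<le> Max (CT T)" using CT_fin i by (meson Max_ge le_trans)
    qed
  qed
  have "(\<lambda>T. qpk (Max (CT T))) \<longlonglongrightarrow> Lp" using filterlim_compose[OF q lim] by simp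
  moreover have "eventually (\<lambda>T. qpk (Max (CT T)) = peak_ratio xs ss T) sequentially"
    using ev by (rule eventually_mono) (simp add: peak_ratio_qpk)
  ultimately show ?thesis by (rule Lim_transform_eventually)
qed

definition Lg where "Lg n = Max (insert 0 (Y ` {i. i < n \<and> sc i}))"

lemma Lg_le_iff: "Lg n \<le> b \<longleftrightarrow> (\<forall>i. i < n \<and> sc i \<longrightarrow> Y i \<le> b)"
  unfolding Lg_def by (subst Max_le_iff) auto

lemma Lg_ge: "i < n \<Longrightarrow> sc i \<Longrightarrow> Y i \<le> Lg n"
  unfolding Lg_def by (intro Max_ge) auto

lemma Lg_le_Y: "Lg n \<le> Y n"
  unfolding Lg_le_iff using Y_mono by auto

lemma Lg_0: "Lg 0 = 0"
  using Lg_le_iff[of 0 0] by simp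

lemma Lg_Suc: "Lg (Suc n) = (if sc n then Y n else Lg n)"
proof (cases "sc n")
  case True
  have "Lg (Suc n) \<le> Y n" unfolding Lg_le_iff using Y_mono by auto
  moreover have "Y n \<le> Lg (Suc n)" using True by (intro Lg_ge) auto
  ultimately show ?thesis using True by simp
next
  case False
  then have "{i. i < Suc n \<and> sc i} = {i. i < n \<and> sc i}" by (auto simp: less_Suc_eq)
  then show ?thesis using False by (simp add: Lg_def)
qed

lemma afun_eq: "afun xs ss n = Y n - Lg n"
proof (induction n)
  case 0 then show ?case by (simp add: Lg_0 gen_time_def)
next
  case (Suc n)
  then show ?case using Lg_Suc[of n] Y_Suc[of n] Lg_le_Y[of n] by auto
qed

lemma Lfull_interval:
  assumes "Y n \<le> t" "t < Y (Suc n)"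
  shows "Lfull t = (if sc n \<and> cpl n < t then Y n else Lg n)"
proof -
  have lt: "i < n" if "sc i" "cpl i < t" "i \<noteq> n" for i
  proof (rule ccontr)
    assume "\<not> i < n" then have "n < i" using that by simp
    then have "Y (Suc n) \<le> Y i" by (rule Y_mono_Suc)
    then show False using cpl_ge[of i] that assms by simp
  qed
  have gt: "cpl i < t" if "i < n" "sc i" for i
    using cpl_lt[of i] Y_mono_Suc[of i n] that assms by simp
  show ?thesis
  proof (cases "sc n \<and> cpl n < t")
    case True
    have "Lfull t \<le> Y n" unfolding Lfull_le_iff using lt Y_mono by (metis less_imp_le order_refl)
    moreover have "Y n \<le> Lfull t" using True by (intro Lfull_ge) auto
    ultimately show ?thesis using True by simp
  next
    case False
    have "Lfull t \<le> Lg n" unfolding Lfull_le_iff using lt False Lg_ge by metis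
    moreover have "Lg n \<le> Lfull t" unfolding Lg_le_iff using gt Lfull_ge by blast
    ultimately show ?thesis using False by (simp only: if_False)
  qed
qed

lemma age_interval:
  assumes "d < xs n"
  shows "age xs ss (Y n + d) = d + (if d < ss n then afun xs ss n else 0)"
proof -
  have t: "Y n \<le> Y n + d" "Y n + d < Y (Suc n)" using assms Y_Suc[of n] by auto
  have c: "(sc n \<and> cpl n < Y n + d) \<longleftrightarrow> \<not> d < ss n"
    using assms spos[of n] by (auto simp: cpl_def)
  show ?thesis
    using age_eq[of "Y n + d"] Lfull_interval[OF t] c Lg_le_Y[of n] afun_eq[of n] by auto
qed

definition Bn where
  "Bn n = real (xs n) * (real (xs n) - 1) / 2 + real (afun xs ss n) * real (min (xs n) (ss n))"

lemma sum_nat_real: "(\<Sum>d<x. real d) = real x * (real x - 1) / 2"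
  by (induction x) (auto simp: field_simps)

lemma Bn_nonneg: "0 \<le> Bn n"
  using xpos[of n] unfolding Bn_def by (intro add_nonneg_nonneg divide_nonneg_pos mult_nonneg_nonneg) auto

lemma block_sum: "(\<Sum>t\<in>{Y n..<Y (Suc n)}. real (age xs ss t)) = Bn n"
proof -
  have "(\<Sum>t\<in>{Y n..<Y (Suc n)}. real (age xs ss t)) = (\<Sum>t\<in>{0 + Y n..<xs n + Y n}. real (age xs ss t))"
    using Y_Suc[of n] by (simp add: add.commute)
  also have "\<dots> = (\<Sum>d\<in>{0..<xs n}. real (age xs ss (d + Y n)))"
    by (rule sum.shift_bounds_nat_ivl)
  also have "\<dots> = (\<Sum>d<xs n. real d + (if d < ss n then real (afun xs ss n) else 0))"
    using age_interval by (intro sum.cong) (auto simp: add.commute)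
  also have "\<dots> = (\<Sum>d<xs n. real d) + (\<Sum>d<xs n. if d < ss n then real (afun xs ss n) else 0)"
    by (rule sum.distrib)
  also have "(\<Sum>d<xs n. if d < ss n then real (afun xs ss n) else 0) = (\<Sum>d\<in>{d\<in>{..<xs n}. d < ss n}. real (afun xs ss n))"
    by (rule sum.inter_filter[symmetric]) simp
  also have "{d\<in>{..<xs n}. d < ss n} = {..<min (xs n) (ss n)}" by auto
  finally show ?thesis by (simp add: Bn_def sum_nat_real)
qed

lemma area: "(\<Sum>t\<in>{1..<Y N}. real (age xs ss t)) = (\<Sum>n<N. Bn n)"
proof (induction N)
  case 0 then show ?case by (simp add: gen_time_def)
next
  case (Suc N)
  have "(\<Sum>t\<in>{1..<Y (Suc N)}. real (age xs ss t)) = (\<Sum>t\<in>{1..<Y N}. real (age xs ss t)) + (\<Sum>t\<in>{Y N..<Y (Suc N)}. real (age xs ss t))"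
    using Y_pos[of N] Y_Suc[of N] by (intro sum.atLeastLessThan_concat[symmetric]) auto
  then show ?case using Suc block_sum by simp
qed

lemma aux_div1: "(n::real) > 0 \<Longrightarrow> (a / n) / ((y / (n + 1)) * ((n + 1) / n) - 1 / n) = a / (y - 1)"
proof -
  assume n: "n > 0"
  have n1: "n + 1 \<noteq> 0" using n by simp
  have "(y / (n + 1)) * ((n + 1) / n) = y / n" using n n1 by simp
  then have "(y / (n + 1)) * ((n + 1) / n) - 1 / n = (y - 1) / n" by (simp add: diff_divide_distrib)
  then show ?thesis using n by simp
qed

lemma aux_div2: "(n::real) > 0 \<Longrightarrow> (a / (n + 1)) * ((n + 1) / n) / (y / n - 1 / n) = a / (y - 1)"
proof -
  assume n: "n > 0"
  have n1: "n + 1 \<noteq> 0" using n by simp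
  have "(a / (n + 1)) * ((n + 1) / n) = a / n" using n n1 by simp
  moreover have "y / n - 1 / n = (y - 1) / n" by (simp add: diff_divide_distrib)
  ultimately show ?thesis using n by simp
qed

definition Ar where "Ar T = (\<Sum>t=1..T. real (age xs ss t))"

lemma Ar_mono: "T \<le> T' \<Longrightarrow> Ar T \<le> Ar T'"
  unfolding Ar_def by (intro sum_mono2) auto

lemma Ar_Y: "Ar (Y N - 1) = (\<Sum>n<N. Bn n)"
proof -
  have "{1..Y N - 1} = {1..<Y N}" using Y_pos[of N] by auto
  then show ?thesis unfolding Ar_def using area by simp
qed

definition NT where "NT T = Max {n. Y n \<le> Suc T}"

lemma NT_fin: "finite {n. Y n \<le> Suc T}"
  by (rule finite_subset[of _ "{..Suc T}"]) (use Y_ge in \<open>auto intro: le_trans Suc_leD\<close>)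

lemma NT_props: "Y (NT T) \<le> Suc T" "Suc T < Y (Suc (NT T))"
proof -
  have ne: "0 \<in> {n. Y n \<le> Suc T}" by (simp add: gen_time_def)
  show "Y (NT T) \<le> Suc T" using Max_in[OF NT_fin] ne unfolding NT_def by blast
  show "Suc T < Y (Suc (NT T))"
  proof (rule ccontr)
    assume "\<not> Suc T < Y (Suc (NT T))"
    then have "Suc (NT T) \<le> NT T" unfolding NT_def using NT_fin by (intro Max_ge) auto
    then show False by simp
  qed
qed

lemma NT_tendsto: "filterlim NT at_top sequentially"
  unfolding filterlim_at_top eventually_sequentially
proof
  fix K
  show "\<exists>N. \<forall>T\<ge>N. K \<le> NT T"
  proof (intro exI allI impI)
    fix T assume "Y K \<le> T"
    then show "K \<le> NT T" unfolding NT_def using NT_fin by (intro Max_ge) auto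
  qed
qed

lemma avg_limit:
  assumes B: "(\<lambda>N. (\<Sum>n<N. Bn n) / real N) \<longlonglongrightarrow> LB"
    and YL: "(\<lambda>N. real (Y N) / real N) \<longlonglongrightarrow> LY" and LY: "LY > 0"
  shows "(\<lambda>T. Ar T / real T) \<longlonglongrightarrow> LB / LY"
proof -
  define BS where "BS N = (\<Sum>n<N. Bn n)" for N
  have BS0: "0 \<le> BS N" for N unfolding BS_def by (intro sum_nonneg Bn_nonneg)
  define fl where "fl N = BS N / (real (Y (Suc N)) - 1)" for N
  define fu where "fu N = BS (Suc N) / (real (Y N) - 1)" for N
  have Y1: "2 \<le> Y N" if "N \<ge> 1" for N
    using Y_mono[OF that] Y_Suc[of 0] xpos[of 0] by (simp add: gen_time_def)
  have B': "(\<lambda>N. BS N / real N) \<longlonglongrightarrow> LB" using B by (simp add: BS_def)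
  have n1: "(\<lambda>N. real (Suc N) / real N) \<longlonglongrightarrow> 1" by (rule LIMSEQ_Suc_n_over_n)
  have n0: "(\<lambda>N. 1 / real N) \<longlonglongrightarrow> 0" by (rule lim_const_over_n)
  have YS: "(\<lambda>N. real (Y (Suc N)) / real (Suc N)) \<longlonglongrightarrow> LY" using LIMSEQ_Suc[OF YL] .
  have BSS: "(\<lambda>N. BS (Suc N) / real (Suc N)) \<longlonglongrightarrow> LB" using LIMSEQ_Suc[OF B'] .
  have "(\<lambda>N. (BS N / real N) / ((real (Y (Suc N)) / real (Suc N)) * (real (Suc N) / real N) - 1 / real N)) \<longlonglongrightarrow> LB / (LY * 1 - 0)"
    using LY by (intro tendsto_intros B' YS n1 n0) auto
  then have "(\<lambda>N. (BS N / real N) / ((real (Y (Suc N)) / real (Suc N)) * (real (Suc N) / real N) - 1 / real N)) \<longlonglongrightarrow> LB / LY" by simp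
  then have fl: "fl \<longlonglongrightarrow> LB / LY"
  proof (rule Lim_transform_eventually)
    show "\<forall>\<^sub>F N in sequentially. (BS N / real N) / ((real (Y (Suc N)) / real (Suc N)) * (real (Suc N) / real N) - 1 / real N) = fl N"
      unfolding eventually_sequentially fl_def using aux_div1 by (intro exI[of _ 1] allI impI) auto
  qed
  have "(\<lambda>N. (BS (Suc N) / real (Suc N)) * (real (Suc N) / real N) / (real (Y N) / real N - 1 / real N)) \<longlonglongrightarrow> LB * 1 / (LY - 0)"
    using LY by (intro tendsto_intros BSS YL n1 n0) auto
  then have "(\<lambda>N. (BS (Suc N) / real (Suc N)) * (real (Suc N) / real N) / (real (Y N) / real N - 1 / real N)) \<longlonglongrightarrow> LB / LY" by simp
  then have fu: "fu \<longlonglongrightarrow> LB / LY"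
  proof (rule Lim_transform_eventually)
    show "\<forall>\<^sub>F N in sequentially. (BS (Suc N) / real (Suc N)) * (real (Suc N) / real N) / (real (Y N) / real N - 1 / real N) = fu N"
      unfolding eventually_sequentially fu_def using aux_div2 by (intro exI[of _ 1] allI impI) auto
  qed
  have fl': "(\<lambda>T. fl (NT T)) \<longlonglongrightarrow> LB / LY" using filterlim_compose[OF fl NT_tendsto] .
  have fu': "(\<lambda>T. fu (NT T)) \<longlonglongrightarrow> LB / LY" using filterlim_compose[OF fu NT_tendsto] .
  have evN: "eventually (\<lambda>T. 1 \<le> NT T) sequentially"
    using NT_tendsto unfolding filterlim_at_top by auto
  have ev: "eventually (\<lambda>T. fl (NT T) \<le> Ar T / real T \<and> Ar T / real T \<le> fu (NT T)) sequentially"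
    using evN
  proof (rule eventually_mono)
    fix T assume N1: "1 \<le> NT T"
    let ?N = "NT T"
    have yN: "Y ?N \<le> Suc T" "Suc T < Y (Suc ?N)" by (rule NT_props)+
    have y2: "2 \<le> Y ?N" using Y1[OF N1] .
    have T1: "1 \<le> T" using yN y2 by simp
    have lo: "BS ?N \<le> Ar T" using Ar_mono[of "Y ?N - 1" T] Ar_Y[of ?N] yN by (simp add: BS_def)
    have hi: "Ar T \<le> BS (Suc ?N)" using Ar_mono[of T "Y (Suc ?N) - 1"] Ar_Y[of "Suc ?N"] yN by (simp add: BS_def)
    have Tle: "real T \<le> real (Y (Suc ?N)) - 1" using yN by linarith
    have Tge: "real (Y ?N) - 1 \<le> real T" using yN by linarith
    have "fl ?N \<le> BS ?N / real T" unfolding fl_def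
      using T1 Tle BS0[of ?N] by (intro divide_left_mono) auto
    also have "\<dots> \<le> Ar T / real T" using lo T1 by (intro divide_right_mono) auto
    finally have 1: "fl ?N \<le> Ar T / real T" .
    have "Ar T / real T \<le> BS (Suc ?N) / real T" using hi T1 by (intro divide_right_mono) auto
    also have "\<dots> \<le> fu ?N" unfolding fu_def
      using y2 Tge BS0[of "Suc ?N"] by (intro divide_left_mono) auto
    finally show "fl ?N \<le> Ar T / real T \<and> Ar T / real T \<le> fu ?N" using 1 by simp
  qed
  show ?thesis
    by (rule tendsto_sandwich[OF _ _ fl' fu']) (use ev in \<open>auto elim: eventually_mono\<close>)
qed

end

lemma ae_zero_of_summable_sq:
  fixes W :: "nat \<Rightarrow> 'a \<Rightarrow> real"
  assumes "prob_space M"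
    and meas[measurable]: "\<And>j. W j \<in> borel_measurable M"
    and int: "\<And>j. integrable M (\<lambda>\<omega>. W j \<omega> ^ 2)"
    and summ: "summable (\<lambda>j. \<integral>\<omega>. W j \<omega> ^ 2 \<partial>M)"
  shows "AE \<omega> in M. (\<lambda>j. W j \<omega>) \<longlonglongrightarrow> 0"
proof -
  interpret prob_space M by fact
  have step: "AE \<omega> in M. eventually (\<lambda>j. \<bar>W j \<omega>\<bar> < 1 / real (Suc i)) sequentially" for i
  proof -
    define e where "e = 1 / real (Suc i)"
    have e: "e > 0" by (simp add: e_def)
    define A where "A j = {\<omega>\<in>space M. e \<le> \<bar>W j \<omega>\<bar>}" for j
    have Am[measurable]: "A j \<in> sets M" for j unfolding A_def by measurable
    have le: "measure M (A j) \<le> (\<integral>\<omega>. W j \<omega> ^ 2 \<partial>M) / e\<^sup>2" for j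
      unfolding A_def using e int by (intro second_moment_method) auto
    have "summable (\<lambda>j. measure M (A j))"
      by (rule summable_comparison_test[OF _ summable_divide[OF summ, of "e\<^sup>2"]])
         (use le in auto)
    then have "AE \<omega> in M. eventually (\<lambda>j. \<omega> \<in> space M - A j) sequentially"
      by (intro borel_cantelli_AE1) (auto simp: emeasure_eq_measure)
    then show ?thesis
      by (rule eventually_mono) (auto simp: A_def e_def elim!: eventually_mono)
  qed
  then have "AE \<omega> in M. \<forall>i. eventually (\<lambda>j. \<bar>W j \<omega>\<bar> < 1 / real (Suc i)) sequentially"
    by (subst AE_all_countable) auto
  then show ?thesis
  proof (rule eventually_mono)
    fix \<omega> assume H: "\<forall>i. eventually (\<lambda>j. \<bar>W j \<omega>\<bar> < 1 / real (Suc i)) sequentially"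
    show "(\<lambda>j. W j \<omega>) \<longlonglongrightarrow> 0"
      unfolding tendsto_iff
    proof (intro allI impI)
      fix r :: real assume r: "r > 0"
      obtain i where i: "1 / real (Suc i) < r" using r by (rule nat_approx_posE)
      show "eventually (\<lambda>j. dist (W j \<omega>) 0 < r) sequentially"
        using H[rule_format, of i] by (rule eventually_mono) (use i in auto)
    qed
  qed
qed

lemma cesaro:
  fixes e :: "nat \<Rightarrow> real"
  assumes "e \<longlonglongrightarrow> \<mu>"
  shows "(\<lambda>n. (\<Sum>k<n. e k) / real n) \<longlonglongrightarrow> \<mu>"
proof -
  define d where "d k = e k - \<mu>" for k
  have d: "d \<longlonglongrightarrow> 0" using assms unfolding d_def using tendsto_diff[OF assms tendsto_const[of \<mu>]] by simp
  have main: "(\<lambda>n. (\<Sum>k<n. d k) / real n) \<longlonglongrightarrow> 0"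
    unfolding tendsto_iff
  proof (intro allI impI)
    fix r :: real assume r: "r > 0"
    have "r / 2 > 0" using r by simp
    then obtain N0 where N0': "\<forall>k\<ge>N0. dist (d k) 0 < r / 2"
      using d unfolding tendsto_iff eventually_sequentially by blast
    then have N0: "\<And>k. k \<ge> N0 \<Longrightarrow> \<bar>d k\<bar> < r / 2" by auto
    define C where "C = (\<Sum>k<N0. \<bar>d k\<bar>)"
    obtain N1 :: nat where N1: "2 * C / r < real N1" using reals_Archimedean2 by blast
    show "eventually (\<lambda>n. dist ((\<Sum>k<n. d k) / real n) 0 < r) sequentially"
      unfolding eventually_sequentially
    proof (intro exI[of _ "N0 + N1 + 1"] allI impI)
      fix n assume n: "N0 + N1 + 1 \<le> n"
      have split: "(\<Sum>k<n. d k) = (\<Sum>k<N0. d k) + (\<Sum>k\<in>{N0..<n}. d k)"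
        using sum.atLeastLessThan_concat[of 0 N0 n d] n by (simp add: lessThan_atLeast0)
      have "\<bar>\<Sum>k<N0. d k\<bar> \<le> C" unfolding C_def by (rule sum_abs)
      moreover have "\<bar>\<Sum>k\<in>{N0..<n}. d k\<bar> \<le> (\<Sum>k\<in>{N0..<n}. r / 2)"
        by (rule order_trans[OF sum_abs sum_mono]) (use N0 in \<open>auto intro: less_imp_le\<close>)
      moreover have "(\<Sum>k\<in>{N0..<n}. r / 2) \<le> real n * (r / 2)" using r by simp
      ultimately have "\<bar>\<Sum>k<n. d k\<bar> \<le> C + real n * (r / 2)" unfolding split by linarith
      moreover have "C < real n * (r / 2)"
      proof -
        have "2 * C / r < real n" using N1 n by linarith
        then show ?thesis using r by (simp add: field_simps)
      qed
      ultimately have "\<bar>\<Sum>k<n. d k\<bar> < real n * r" by linarith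
      moreover have "real n > 0" using n by simp
      ultimately show "dist ((\<Sum>k<n. d k) / real n) 0 < r"
        by (simp add: abs_divide field_simps)
    qed
  qed
  have eq: "(\<Sum>k<n. d k) / real n + \<mu> = (\<Sum>k<n. e k) / real n" if "n > 0" for n
    using that by (simp add: d_def sum_subtractf field_simps)
  have "(\<lambda>n. (\<Sum>k<n. d k) / real n + \<mu>) \<longlonglongrightarrow> 0 + \<mu>" by (intro tendsto_intros main)
  then have "(\<lambda>n. (\<Sum>k<n. d k) / real n + \<mu>) \<longlonglongrightarrow> \<mu>" by simp
  moreover have "eventually (\<lambda>n. (\<Sum>k<n. d k) / real n + \<mu> = (\<Sum>k<n. e k) / real n) sequentially"
    using eventually_gt_at_top[of 0] by (rule eventually_mono) (rule eq)
  ultimately show ?thesis by (rule Lim_transform_eventually)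
qed

definition kseq :: "real \<Rightarrow> nat \<Rightarrow> nat" where "kseq a j = nat \<lfloor>a ^ j\<rfloor>"

lemma kseq_real: "a \<ge> 1 \<Longrightarrow> real (kseq a j) = of_int \<lfloor>a ^ j\<rfloor>"
  unfolding kseq_def using one_le_power[of a j] by (simp add: of_nat_nat)

lemma kseq_le: "a \<ge> 1 \<Longrightarrow> real (kseq a j) \<le> a ^ j"
  using kseq_real by simp

lemma kseq_gt: "a \<ge> 1 \<Longrightarrow> a ^ j - 1 < real (kseq a j)"
  using kseq_real[of a j] floor_correct[of "a ^ j"] by linarith

lemma kseq_ge1: "a \<ge> 1 \<Longrightarrow> 1 \<le> kseq a j"
  unfolding kseq_def using one_le_power[of a j] by (simp add: le_nat_iff)

lemma kseq_mono: "a \<ge> 1 \<Longrightarrow> i \<le> j \<Longrightarrow> kseq a i \<le> kseq a j"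
  unfolding kseq_def by (intro nat_mono floor_mono power_increasing) auto

lemma kseq_0: "kseq a 0 = 1" by (simp add: kseq_def)

lemma kseq_unbounded: "a > 1 \<Longrightarrow> \<exists>j. n < kseq a j"
proof -
  assume a: "a > 1"
  obtain j where "real n + 1 < a ^ j" using real_arch_pow[OF a] by blast
  then have "real n < real (kseq a j)" using kseq_gt[of a j] a by simp
  then show ?thesis by auto
qed

lemma kseq_ratio: "a > 1 \<Longrightarrow> \<exists>J. \<forall>j\<ge>J. real (kseq a (Suc j)) \<le> a\<^sup>2 * real (kseq a j)"
proof -
  assume a: "a > 1"
  obtain J where J: "a / (a - 1) < a ^ J" using real_arch_pow[OF a] by blast
  show ?thesis
  proof (intro exI allI impI)
    fix j assume j: "J \<le> j"
    have "a ^ J \<le> a ^ j" using a j by (intro power_increasing) auto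
    then have "a / (a - 1) < a ^ j" using J by simp
    then have "a < a ^ j * (a - 1)" using a by (simp add: field_simps)
    then have "a * a \<le> a * (a ^ j * (a - 1))" using a by (intro mult_left_mono) auto
    then have 1: "a ^ Suc j \<le> a\<^sup>2 * (a ^ j - 1)" by (simp add: algebra_simps power2_eq_square)
    have "real (kseq a (Suc j)) \<le> a ^ Suc j" using kseq_le[of a "Suc j"] a by simp
    also note 1
    also have "a\<^sup>2 * (a ^ j - 1) \<le> a\<^sup>2 * real (kseq a j)"
      using kseq_gt[of a j] a by (intro mult_left_mono) auto
    finally show "real (kseq a (Suc j)) \<le> a\<^sup>2 * real (kseq a j)" .
  qed
qed

lemma interp:
  fixes s :: "nat \<Rightarrow> real"
  assumes mono: "mono s" and nn: "\<And>n. 0 \<le> s n"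
    and H: "\<And>m. (\<lambda>j. s (kseq (1 + 1 / real (Suc m)) j) / real (kseq (1 + 1 / real (Suc m)) j)) \<longlonglongrightarrow> L"
  shows "(\<lambda>n. s n / real n) \<longlonglongrightarrow> L"
proof -
  have L0: "0 \<le> L"
    using H[of 0] by (rule LIMSEQ_le_const) (use nn in \<open>auto intro: divide_nonneg_nonneg\<close>)
  show ?thesis unfolding tendsto_iff
  proof (intro allI impI)
    fix \<epsilon> :: real assume \<epsilon>: "\<epsilon> > 0"
    define \<eta> where "\<eta> = \<epsilon> / 4"
    define \<theta> where "\<theta> = \<epsilon> / (4 * (L + \<epsilon>))"
    have \<eta>: "\<eta> > 0" using \<epsilon> by (simp add: \<eta>_def)
    have \<theta>: "\<theta> > 0" using \<epsilon> L0 by (simp add: \<theta>_def)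
    have ne: "L + \<epsilon> \<noteq> 0" "4 * L + 4 * \<epsilon> \<noteq> 0" using \<epsilon> L0 by auto
    have \<theta>L: "\<theta> * (L + \<epsilon>) = \<epsilon> / 4" using ne by (simp add: \<theta>_def field_simps)
    obtain m :: nat where m: "3 / \<theta> < real m" using reals_Archimedean2 by blast
    define a where "a = 1 + 1 / real (Suc m)"
    have a1: "a > 1" by (simp add: a_def)
    have a2: "a\<^sup>2 \<le> 1 + \<theta>"
    proof -
      have "a\<^sup>2 = 1 + 2 / real (Suc m) + 1 / real (Suc m) * (1 / real (Suc m))"
        by (simp add: a_def power2_eq_square algebra_simps)
      also have "1 / real (Suc m) * (1 / real (Suc m)) \<le> 1 / real (Suc m)"
        by (intro mult_left_le) auto
      finally have "a\<^sup>2 \<le> 1 + 3 / real (Suc m)" by simp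
      also have "3 / real (Suc m) \<le> \<theta>"
      proof -
        have "3 < \<theta> * real m" using m \<theta> by (simp add: field_simps)
        then have "3 \<le> \<theta> * real (Suc m)" using \<theta> by (simp add: algebra_simps)
        then show ?thesis by (simp add: field_simps)
      qed
      finally show ?thesis by simp
    qed
    obtain J1 where J1: "\<And>j. j \<ge> J1 \<Longrightarrow> dist (s (kseq a j) / real (kseq a j)) L < \<eta>"
      using H[of m] \<eta> unfolding tendsto_iff eventually_sequentially a_def by blast
    obtain J2 where J2: "\<And>j. j \<ge> J2 \<Longrightarrow> real (kseq a (Suc j)) \<le> a\<^sup>2 * real (kseq a j)"
      using kseq_ratio[OF a1] by blast
    define J where "J = J1 + J2"
    show "eventually (\<lambda>n. dist (s n / real n) L < \<epsilon>) sequentially"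
      unfolding eventually_sequentially
    proof (intro exI[of _ "kseq a J"] allI impI)
      fix n assume n: "kseq a J \<le> n"
      have n1: "1 \<le> n" using kseq_ge1[of a J] a1 n by simp
      define j where "j = (LEAST j. n < kseq a (Suc j))"
      have ex: "\<exists>j. n < kseq a (Suc j)"
      proof -
        obtain j0 where "n < kseq a j0" using kseq_unbounded[OF a1] by blast
        then have "n < kseq a (Suc j0)" using kseq_mono[of a j0 "Suc j0"] a1 by simp
        then show ?thesis by blast
      qed
      have nj: "n < kseq a (Suc j)" unfolding j_def using ex by (rule LeastI_ex)
      have jn: "kseq a j \<le> n"
      proof (cases j)
        case 0 then show ?thesis using n1 kseq_0 by simp
      next
        case (Suc j')
        then have "j' < j" by simp
        then have "\<not> n < kseq a (Suc j')"
          using not_less_Least[of j' "\<lambda>j. n < kseq a (Suc j)"] unfolding j_def by blast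
        then show ?thesis using Suc by simp
      qed
      have jJ: "J \<le> j"
      proof (rule ccontr)
        assume "\<not> J \<le> j"
        then have "kseq a (Suc j) \<le> kseq a J" using a1 by (intro kseq_mono) auto
        then show False using nj n by simp
      qed
      have kj1: "1 \<le> real (kseq a j)" using kseq_ge1[of a j] a1 by simp
      have kS1: "1 \<le> real (kseq a (Suc j))" using kseq_ge1[of a "Suc j"] a1 by simp
      have rat: "real (kseq a (Suc j)) \<le> a\<^sup>2 * real (kseq a j)" using J2 jJ J_def by simp
      have d1: "dist (s (kseq a (Suc j)) / real (kseq a (Suc j))) L < \<eta>" using J1 jJ J_def by simp
      have d0: "dist (s (kseq a j) / real (kseq a j)) L < \<eta>" using J1 jJ J_def by simp
      have rn: "real n > 0" using n1 by simp
      have "s n \<le> s (kseq a (Suc j))" using mono nj by (simp add: monoD)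
      also have "s (kseq a (Suc j)) \<le> (L + \<eta>) * real (kseq a (Suc j))"
        using d1 kS1 by (simp add: dist_real_def abs_less_iff field_simps)
      also have "\<dots> \<le> (L + \<eta>) * (a\<^sup>2 * real n)"
      proof -
        have "a\<^sup>2 * real (kseq a j) \<le> a\<^sup>2 * real n" using jn by (intro mult_left_mono) auto
        then show ?thesis using rat L0 \<eta> by (intro mult_left_mono) auto
      qed
      also have "\<dots> \<le> (L + \<eta>) * ((1 + \<theta>) * real n)"
        using a2 L0 \<eta> rn by (intro mult_left_mono mult_right_mono) auto
      finally have up: "s n / real n \<le> (L + \<eta>) * (1 + \<theta>)" using rn by (simp add: field_simps)
      have "(L + \<eta>) * (1 + \<theta>) = L + \<eta> + \<theta> * (L + \<eta>)" by (simp add: algebra_simps)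
      also have "\<theta> * (L + \<eta>) \<le> \<theta> * (L + \<epsilon>)" using \<theta> \<epsilon> by (intro mult_left_mono) (auto simp: \<eta>_def)
      finally have "(L + \<eta>) * (1 + \<theta>) \<le> L + \<epsilon> / 2" using \<theta>L by (simp add: \<eta>_def)
      then have up2: "s n / real n < L + \<epsilon>" using up \<epsilon> by linarith
      have low2: "L - \<epsilon> < s n / real n"
      proof (cases "L - \<eta> \<ge> 0")
        case False
        then have "L - \<epsilon> < 0" using \<epsilon> unfolding \<eta>_def by linarith
        moreover have "0 \<le> s n / real n" using nn rn by simp
        ultimately show ?thesis by simp
      next
        case True
        have "(L - \<eta>) * real (kseq a j) \<le> s (kseq a j)"
          using d0 kj1 by (simp add: dist_real_def abs_less_iff field_simps)
        also have "s (kseq a j) \<le> s n" using mono jn by (simp add: monoD)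
        finally have A: "(L - \<eta>) * real (kseq a j) \<le> s n" .
        have "real n \<le> a\<^sup>2 * real (kseq a j)" using nj rat by simp
        then have "real n / a\<^sup>2 \<le> real (kseq a j)" using a1 by (simp add: field_simps)
        moreover have "(1 - \<theta>) * real n \<le> real n / a\<^sup>2"
        proof -
          have "(1 - \<theta>) * a\<^sup>2 \<le> 1"
          proof (cases "1 - \<theta> \<ge> 0")
            case True
            then have "(1 - \<theta>) * a\<^sup>2 \<le> (1 - \<theta>) * (1 + \<theta>)" using a2 by (intro mult_left_mono)
            also have "\<dots> \<le> 1" by (simp add: algebra_simps)
            finally show ?thesis .
          next
            case False
            then have "(1 - \<theta>) * a\<^sup>2 \<le> 0" by (intro mult_nonpos_nonneg) auto
            then show ?thesis by simp
          qed
          then have "(1 - \<theta>) * a\<^sup>2 * real n \<le> real n" using rn by (simp add: mult_le_cancel_right1)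
          then show ?thesis using a1 by (simp add: field_simps)
        qed
        ultimately have "(1 - \<theta>) * real n \<le> real (kseq a j)" by linarith
        then have "(L - \<eta>) * ((1 - \<theta>) * real n) \<le> (L - \<eta>) * real (kseq a j)"
          using True by (intro mult_left_mono) auto
        with A have B: "(L - \<eta>) * (1 - \<theta>) \<le> s n / real n" using rn by (simp add: field_simps)
        have e1: "(L - \<eta>) * (1 - \<theta>) = L - \<eta> - \<theta> * (L - \<eta>)" by (simp add: algebra_simps)
        have e2: "\<theta> * (L - \<eta>) \<le> \<theta> * (L + \<epsilon>)" using \<theta> \<epsilon> \<eta> by (intro mult_left_mono) auto
        have "L - \<eta> - \<epsilon> / 4 \<le> (L - \<eta>) * (1 - \<theta>)" using e1 e2 \<theta>L by linarith
        then show ?thesis using B \<epsilon> by (simp add: \<eta>_def)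
      qed
      show "dist (s n / real n) L < \<epsilon>" using up2 low2 by (simp add: dist_real_def abs_less_iff)
    qed
  qed
qed

lemma PiM_count_all_sets:
  assumes "finite I" "U \<subseteq> space (PiM I (\<lambda>_. count_space (UNIV::nat set)))"
  shows "U \<in> sets (PiM I (\<lambda>_. count_space (UNIV::nat set)))"
proof -
  let ?P = "PiM I (\<lambda>_. count_space (UNIV::nat set))"
  have sp: "space ?P = PiE I (\<lambda>_. UNIV)" by (simp add: space_PiM)
  have cP: "countable (PiE I (\<lambda>_. UNIV::nat set))" using assms(1) by (intro countable_PiE) auto
  have cU: "countable U"
    using assms(2) unfolding sp using cP countable_subset by blast
  have single: "{z} \<in> sets ?P" if "z \<in> U" for z
  proof -
    have z: "z \<in> PiE I (\<lambda>_. UNIV)" using that assms(2) sp by auto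
    have e: "restrict z I = z" using z by (intro extensional_restrict) (simp add: PiE_iff)
    have "PiE I (\<lambda>i. {z i}) = {restrict z I}" by (subst PiE_eq_singleton) simp
    then have "{z} = PiE I (\<lambda>i. {z i})" using e by simp
    also have "\<dots> \<in> sets ?P" using assms(1) by (intro sets_PiM_I_finite) auto
    finally show ?thesis .
  qed
  have "U = (\<Union>z\<in>U. {z})" by auto
  also have "\<dots> \<in> sets ?P" using cU single by (intro sets.countable_UN'') auto
  finally show ?thesis .
qed

lemma PiM_count_measurable:
  assumes "finite I"
  shows "f \<in> borel_measurable (PiM I (\<lambda>_. count_space (UNIV::nat set)))"
proof (rule measurableI)
  fix A
  show "f -` A \<inter> space (PiM I (\<lambda>_. count_space (UNIV::nat set))) \<in> sets (PiM I (\<lambda>_. count_space (UNIV::nat set)))"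
    by (rule PiM_count_all_sets[OF assms]) blast
qed simp

locale model = prob_space M for M :: "'a measure" +
  fixes X S :: "nat \<Rightarrow> 'a \<Rightarrow> nat"
  assumes indep: "indep_vars (\<lambda>_. count_space UNIV) (\<lambda>j. case j of Inl n \<Rightarrow> X n | Inr n \<Rightarrow> S n) UNIV"
    and X_id: "\<And>n. distr M (count_space UNIV) (X n) = distr M (count_space UNIV) (X 0)"
    and S_id: "\<And>n. distr M (count_space UNIV) (S n) = distr M (count_space UNIV) (S 0)"
    and X_pos: "\<And>n \<omega>. \<omega> \<in> space M \<Longrightarrow> X n \<omega> \<ge> 1"
    and S_pos: "\<And>n \<omega>. \<omega> \<in> space M \<Longrightarrow> S n \<omega> \<ge> 1"
begin

definition Zf :: "nat + nat \<Rightarrow> 'a \<Rightarrow> nat" where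
  "Zf j = (case j of Inl n \<Rightarrow> X n | Inr n \<Rightarrow> S n)"

definition zv :: "'a \<Rightarrow> nat + nat \<Rightarrow> nat" where "zv \<omega> = (\<lambda>j. Zf j \<omega>)"

lemma indep': "indep_vars (\<lambda>_. count_space UNIV) Zf UNIV"
  using indep unfolding Zf_def by simp

lemma X_meas[measurable]: "X n \<in> measurable M (count_space UNIV)"
proof -
  have "random_variable (count_space UNIV) (Zf (Inl n))" using indep' unfolding indep_vars_def by blast
  then show ?thesis by (simp add: Zf_def)
qed

lemma S_meas[measurable]: "S n \<in> measurable M (count_space UNIV)"
proof -
  have "random_variable (count_space UNIV) (Zf (Inr n))" using indep' unfolding indep_vars_def by blast
  then show ?thesis by (simp add: Zf_def)
qed

definition blk :: "nat set \<Rightarrow> (nat + nat) set" where "blk A = Inl ` A \<union> Inr ` A"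

definition local_on :: "nat set \<Rightarrow> ((nat + nat \<Rightarrow> nat) \<Rightarrow> 'b) \<Rightarrow> bool" where
  "local_on A \<Phi> \<longleftrightarrow> (\<forall>z z'. (\<forall>k\<in>A. z (Inl k) = z' (Inl k) \<and> z (Inr k) = z' (Inr k)) \<longrightarrow> \<Phi> z = \<Phi> z')"

lemma local_on_restrict:
  assumes "local_on A \<Phi>"
  shows "\<Phi> (restrict z (blk A)) = \<Phi> z"
proof -
  have "\<forall>k\<in>A. restrict z (blk A) (Inl k) = z (Inl k) \<and> restrict z (blk A) (Inr k) = z (Inr k)"
    by (auto simp: blk_def)
  then show ?thesis using assms unfolding local_on_def by blast
qed

lemma block_indep:
  fixes \<Phi> \<Psi> :: "(nat + nat \<Rightarrow> nat) \<Rightarrow> real"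
  assumes A: "finite A" and B: "finite B" and AB: "A \<inter> B = {}"
    and lA: "local_on A \<Phi>" and lB: "local_on B \<Psi>"
  shows "indep_var borel (\<lambda>\<omega>. \<Phi> (zv \<omega>)) borel (\<lambda>\<omega>. \<Psi> (zv \<omega>))"
proof -
  have fA: "finite (blk A)" and fB: "finite (blk B)" using A B by (auto simp: blk_def)
  have d: "blk A \<inter> blk B = {}" using AB by (auto simp: blk_def)
  have iv: "indep_var (PiM (blk A) (\<lambda>_. count_space UNIV)) (\<lambda>\<omega>. restrict (\<lambda>i. Zf i \<omega>) (blk A))
                      (PiM (blk B) (\<lambda>_. count_space UNIV)) (\<lambda>\<omega>. restrict (\<lambda>i. Zf i \<omega>) (blk B))"
    by (rule indep_var_restrict[OF indep' d]) auto
  have "indep_var borel (\<Phi> \<circ> (\<lambda>\<omega>. restrict (\<lambda>i. Zf i \<omega>) (blk A))) borel (\<Psi> \<circ> (\<lambda>\<omega>. restrict (\<lambda>i. Zf i \<omega>) (blk B)))"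
    by (rule indep_var_compose[OF iv]) (auto intro: PiM_count_measurable fA fB)
  moreover have "\<Phi> \<circ> (\<lambda>\<omega>. restrict (\<lambda>i. Zf i \<omega>) (blk A)) = (\<lambda>\<omega>. \<Phi> (zv \<omega>))"
    using local_on_restrict[OF lA] by (auto simp: zv_def fun_eq_iff)
  moreover have "\<Psi> \<circ> (\<lambda>\<omega>. restrict (\<lambda>i. Zf i \<omega>) (blk B)) = (\<lambda>\<omega>. \<Psi> (zv \<omega>))"
    using local_on_restrict[OF lB] by (auto simp: zv_def fun_eq_iff)
  ultimately show ?thesis by simp
qed

lemma zv_meas_fun:
  fixes \<Phi> :: "(nat + nat \<Rightarrow> nat) \<Rightarrow> real"
  assumes "finite A" "local_on A \<Phi>"
  shows "(\<lambda>\<omega>. \<Phi> (zv \<omega>)) \<in> borel_measurable M"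
proof -
  have fA: "finite (blk A)" using assms by (auto simp: blk_def)
  have "(\<lambda>\<omega>. restrict (\<lambda>i. Zf i \<omega>) (blk A)) \<in> measurable M (PiM (blk A) (\<lambda>_. count_space UNIV))"
    using indep' unfolding indep_vars_def by (intro measurable_restrict) auto
  then have "(\<lambda>\<omega>. \<Phi> (restrict (\<lambda>i. Zf i \<omega>) (blk A))) \<in> borel_measurable M"
    using PiM_count_measurable[OF fA] by (rule measurable_compose)
  then show ?thesis using local_on_restrict[OF assms(2)] by (simp add: zv_def)
qed

lemma joint_eq: "prob {\<omega>\<in>space M. X k \<omega> = a \<and> S k \<omega> = b} = prob {\<omega>\<in>space M. X 0 \<omega> = a \<and> S 0 \<omega> = b}"
proof -
  have pr: "prob {\<omega>\<in>space M. X k \<omega> = a \<and> S k \<omega> = b} = prob {\<omega>\<in>space M. X k \<omega> = a} * prob {\<omega>\<in>space M. S k \<omega> = b}" for k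
  proof -
    let ?A = "\<lambda>j::nat+nat. if j = Inl k then {a} else {b}"
    have "prob (\<Inter>j\<in>{Inl k, Inr k}. Zf j -` ?A j \<inter> space M) = (\<Prod>j\<in>{Inl k, Inr k}. prob (Zf j -` ?A j \<inter> space M))"
      by (rule indep_varsD[OF indep']) auto
    moreover have "(\<Inter>j\<in>{Inl k, Inr k}. Zf j -` ?A j \<inter> space M) = {\<omega>\<in>space M. X k \<omega> = a \<and> S k \<omega> = b}"
      by (auto simp: Zf_def)
    moreover have "Zf (Inl k) -` ?A (Inl k) \<inter> space M = {\<omega>\<in>space M. X k \<omega> = a}" by (auto simp: Zf_def)
    moreover have "Zf (Inr k) -` ?A (Inr k) \<inter> space M = {\<omega>\<in>space M. S k \<omega> = b}" by (auto simp: Zf_def)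
    ultimately show ?thesis by simp
  qed
  have px: "prob {\<omega>\<in>space M. X k \<omega> = a} = prob {\<omega>\<in>space M. X 0 \<omega> = a}"
  proof -
    have "measure (distr M (count_space UNIV) (X k)) {a} = measure (distr M (count_space UNIV) (X 0)) {a}"
      using X_id[of k] by simp
    then show ?thesis by (simp add: measure_distr vimage_def Int_def conj_commute)
  qed
  have ps: "prob {\<omega>\<in>space M. S k \<omega> = b} = prob {\<omega>\<in>space M. S 0 \<omega> = b}"
  proof -
    have "measure (distr M (count_space UNIV) (S k)) {b} = measure (distr M (count_space UNIV) (S 0)) {b}"
      using S_id[of k] by simp
    then show ?thesis by (simp add: measure_distr vimage_def Int_def conj_commute)
  qed
  show ?thesis using pr[of k] pr[of 0] px ps by simp
qed

lemma fun_distr_eq: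
  fixes \<phi> :: "nat \<Rightarrow> nat \<Rightarrow> nat"
  shows "distr M (count_space UNIV) (\<lambda>\<omega>. \<phi> (X k \<omega>) (S k \<omega>)) = distr M (count_space UNIV) (\<lambda>\<omega>. \<phi> (X 0 \<omega>) (S 0 \<omega>))"
proof -
  have pair: "distr M (count_space UNIV) (\<lambda>\<omega>. (X k \<omega>, S k \<omega>)) = distr M (count_space UNIV) (\<lambda>\<omega>. (X 0 \<omega>, S 0 \<omega>))"
  proof (rule measure_eqI_countable)
    fix ab :: "nat \<times> nat"
    obtain a b where ab: "ab = (a, b)" by force
    have "emeasure (distr M (count_space UNIV) (\<lambda>\<omega>. (X j \<omega>, S j \<omega>))) {ab} = prob {\<omega>\<in>space M. X j \<omega> = a \<and> S j \<omega> = b}" for j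
      by (simp add: emeasure_distr emeasure_eq_measure ab vimage_def Int_def conj_commute)
    then show "emeasure (distr M (count_space UNIV) (\<lambda>\<omega>. (X k \<omega>, S k \<omega>))) {ab} = emeasure (distr M (count_space UNIV) (\<lambda>\<omega>. (X 0 \<omega>, S 0 \<omega>))) {ab}"
      using joint_eq by simp
  qed auto
  have "distr M (count_space UNIV) (\<lambda>\<omega>. \<phi> (X j \<omega>) (S j \<omega>)) = distr (distr M (count_space UNIV) (\<lambda>\<omega>. (X j \<omega>, S j \<omega>))) (count_space UNIV) (case_prod \<phi>)" for j
    by (subst distr_distr) (auto simp: comp_def)
  then show ?thesis using pair by simp
qed

end

locale iidn = prob_space M for M :: "'a measure" +
  fixes Y :: "nat \<Rightarrow> 'a \<Rightarrow> nat"
  assumes Ymeas[measurable]: "\<And>k. Y k \<in> measurable M (count_space UNIV)"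
    and Yind: "\<And>i j (f::nat \<Rightarrow> real) (g::nat \<Rightarrow> real). i \<noteq> j \<Longrightarrow> indep_var borel (\<lambda>\<omega>. f (Y i \<omega>)) borel (\<lambda>\<omega>. g (Y j \<omega>))"
    and Yid: "\<And>k. distr M (count_space UNIV) (Y k) = distr M (count_space UNIV) (Y 0)"
    and Yint: "integrable M (\<lambda>\<omega>. real (Y 0 \<omega>))"
begin

lemma fY_meas[measurable]: "(\<lambda>\<omega>. (f::nat \<Rightarrow> real) (Y k \<omega>)) \<in> borel_measurable M"
  by (rule measurable_compose[OF Ymeas]) simp

lemma exp_eq: "(\<integral>\<omega>. (f::nat \<Rightarrow> real) (Y k \<omega>) \<partial>M) = (\<integral>\<omega>. f (Y 0 \<omega>) \<partial>M)"
proof -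
  have "(\<integral>\<omega>. f (Y j \<omega>) \<partial>M) = integral\<^sup>L (distr M (count_space UNIV) (Y j)) f" for j
    by (subst integral_distr) auto
  then show ?thesis using Yid[of k] by simp
qed

lemma int_eq: "integrable M (\<lambda>\<omega>. (f::nat \<Rightarrow> real) (Y k \<omega>)) \<longleftrightarrow> integrable M (\<lambda>\<omega>. f (Y 0 \<omega>))"
proof -
  have "integrable M (\<lambda>\<omega>. f (Y j \<omega>)) \<longleftrightarrow> integrable (distr M (count_space UNIV) (Y j)) f" for j
    by (subst integrable_distr_eq) auto
  then show ?thesis using Yid[of k] by simp
qed

lemma prob_eq: "prob {\<omega>\<in>space M. P (Y k \<omega>)} = prob {\<omega>\<in>space M. P (Y 0 \<omega>)}"
proof -
  have "prob {\<omega>\<in>space M. P (Y j \<omega>)} = measure (distr M (count_space UNIV) (Y j)) {y. P y}" for j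
    by (subst measure_distr) (auto simp: vimage_def Int_def conj_commute)
  then show ?thesis using Yid[of k] by simp
qed

definition \<mu> where "\<mu> = (\<integral>\<omega>. real (Y 0 \<omega>) \<partial>M)"

definition tr :: "nat \<Rightarrow> nat \<Rightarrow> real" where "tr k y = (if y \<le> k then real y else 0)"

definition e where "e k = (\<integral>\<omega>. tr k (Y 0 \<omega>) \<partial>M)"

lemma tr_nonneg: "0 \<le> tr k y" by (simp add: tr_def)
lemma tr_le: "tr k y \<le> real y" by (simp add: tr_def)
lemma tr_le_k: "tr k y \<le> real k" by (simp add: tr_def)

lemma tr_int: "integrable M (\<lambda>\<omega>. f (tr k (Y j \<omega>)))" for f :: "real \<Rightarrow> real"
proof -
  define B where "B = (\<Sum>y\<le>k. \<bar>f (real y)\<bar>) + \<bar>f 0\<bar>"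
  have b: "\<bar>f (tr k y)\<bar> \<le> B" for y
  proof (cases "y \<le> k")
    case True
    have "\<bar>f (real y)\<bar> \<le> (\<Sum>y\<le>k. \<bar>f (real y)\<bar>)"
      using True by (intro member_le_sum[where f="\<lambda>y. \<bar>f (real y)\<bar>"]) auto
    then show ?thesis using True by (simp add: tr_def B_def)
  next
    case False
    have "0 \<le> (\<Sum>y\<le>k. \<bar>f (real y)\<bar>)" by (intro sum_nonneg) auto
    then show ?thesis using False by (simp add: tr_def B_def)
  qed
  have "AE \<omega> in M. norm (f (tr k (Y j \<omega>))) \<le> B" using b by (intro AE_I2) simp
  then show ?thesis by (rule integrable_const_bound) simp
qed

lemma e_tendsto: "e \<longlonglongrightarrow> \<mu>"
  unfolding e_def \<mu>_def
proof (rule integral_dominated_convergence[where w="\<lambda>\<omega>. real (Y 0 \<omega>)"])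
  show "AE \<omega> in M. (\<lambda>k. tr k (Y 0 \<omega>)) \<longlonglongrightarrow> real (Y 0 \<omega>)"
  proof (intro AE_I2)
    fix \<omega>
    show "(\<lambda>k. tr k (Y 0 \<omega>)) \<longlonglongrightarrow> real (Y 0 \<omega>)"
      by (rule tendsto_eventually) (auto simp: tr_def eventually_sequentially intro!: exI[of _ "Y 0 \<omega>"])
  qed
  show "AE \<omega> in M. norm (tr k (Y 0 \<omega>)) \<le> real (Y 0 \<omega>)" for k
    by (intro AE_I2) (simp add: tr_def)
qed (use Yint in auto)

lemma cesaro_e: "(\<lambda>n. (\<Sum>k<n. e k) / real n) \<longlonglongrightarrow> \<mu>"
  by (rule cesaro[OF e_tendsto])

lemma summable_tail: "summable (\<lambda>k. prob {\<omega>\<in>space M. k < Y k \<omega>})"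
proof (rule summableI_nonneg_bounded)
  fix n
  have "(\<Sum>k<n. prob {\<omega>\<in>space M. k < Y k \<omega>}) = (\<Sum>k<n. prob {\<omega>\<in>space M. k < Y 0 \<omega>})"
  proof (rule sum.cong[OF refl])
    fix k show "prob {\<omega>\<in>space M. k < Y k \<omega>} = prob {\<omega>\<in>space M. k < Y 0 \<omega>}"
      using prob_eq[of "\<lambda>y. k < y" k] by simp
  qed
  also have "\<dots> = (\<Sum>k<n. \<integral>\<omega>. indicator {\<omega>\<in>space M. k < Y 0 \<omega>} \<omega> \<partial>M)"
    by simp
  also have "\<dots> = (\<integral>\<omega>. (\<Sum>k<n. indicator {\<omega>\<in>space M. k < Y 0 \<omega>} \<omega>) \<partial>M)"
  proof -
    define A where "A k = {\<omega>\<in>space M. k < Y 0 \<omega>}" for k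
    have "(\<integral>\<omega>. (\<Sum>k<n. indicator (A k) \<omega>) \<partial>M) = (\<Sum>k<n. (\<integral>\<omega>. indicator (A k) \<omega> \<partial>M) :: real)"
      by (rule Bochner_Integration.integral_sum) (auto simp: A_def emeasure_eq_measure intro!: integrable_real_indicator)
    then show ?thesis by (simp add: A_def)
  qed
  also have "\<dots> \<le> (\<integral>\<omega>. real (Y 0 \<omega>) \<partial>M)"
  proof (rule integral_mono)
    show "integrable M (\<lambda>\<omega>. \<Sum>k<n. indicator {\<omega>\<in>space M. k < Y 0 \<omega>} \<omega> :: real)"
      by (intro Bochner_Integration.integrable_sum integrable_real_indicator) (auto simp: emeasure_eq_measure)
    show "integrable M (\<lambda>\<omega>. real (Y 0 \<omega>))" by (rule Yint)
    fix \<omega> assume \<omega>: "\<omega> \<in> space M"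
    have "(\<Sum>k<n. indicator {\<omega>\<in>space M. k < Y 0 \<omega>} \<omega> :: real) = (\<Sum>k<n. if k < Y 0 \<omega> then 1 else 0)"
      using \<omega> by (intro sum.cong) (auto simp: indicator_def)
    also have "\<dots> = (\<Sum>k\<in>{k\<in>{..<n}. k < Y 0 \<omega>}. 1)" by (rule sum.inter_filter[symmetric]) simp
    also have "\<dots> = real (card {k\<in>{..<n}. k < Y 0 \<omega>})" by simp
    also have "\<dots> \<le> real (card {..<Y 0 \<omega>})" by (intro of_nat_mono card_mono) auto
    finally show "(\<Sum>k<n. indicator {\<omega>\<in>space M. k < Y 0 \<omega>} \<omega> :: real) \<le> real (Y 0 \<omega>)" by simp
  qed
  finally show "(\<Sum>k<n. prob {\<omega>\<in>space M. k < Y k \<omega>}) \<le> (\<integral>\<omega>. real (Y 0 \<omega>) \<partial>M)" .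
qed simp

lemma ae_trunc: "AE \<omega> in M. eventually (\<lambda>k. Y k \<omega> \<le> k) sequentially"
proof -
  have "AE \<omega> in M. eventually (\<lambda>k. \<omega> \<in> space M - {\<omega>\<in>space M. k < Y k \<omega>}) sequentially"
    using summable_tail by (intro borel_cantelli_AE1) (auto simp: emeasure_eq_measure)
  then show ?thesis by (rule eventually_mono) (auto elim!: eventually_mono)
qed

definition u where "u k \<omega> = tr k (Y k \<omega>) - e k"
definition v where "v k = (\<integral>\<omega>. (tr k (Y 0 \<omega>))\<^sup>2 \<partial>M)"

lemma u_meas[measurable]: "u k \<in> borel_measurable M"
  unfolding u_def by measurable

lemma u_bound: "\<bar>u k \<omega>\<bar> \<le> real k + \<bar>e k\<bar>"
  using tr_nonneg[of k "Y k \<omega>"] tr_le_k[of k "Y k \<omega>"] unfolding u_def by linarith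

lemma u_prod_int: "integrable M (\<lambda>\<omega>. u i \<omega> * u j \<omega>)"
proof (rule integrable_const_bound)
  show "AE \<omega> in M. norm (u i \<omega> * u j \<omega>) \<le> (real i + \<bar>e i\<bar>) * (real j + \<bar>e j\<bar>)"
    by (intro AE_I2) (simp add: abs_mult mult_mono u_bound)
qed simp

lemma u_int: "integrable M (u i)"
  by (rule integrable_const_bound[where B="real i + \<bar>e i\<bar>"]) (auto simp: u_bound)

lemma u_mean: "(\<integral>\<omega>. u i \<omega> \<partial>M) = 0"
proof -
  have "(\<integral>\<omega>. u i \<omega> \<partial>M) = (\<integral>\<omega>. tr i (Y i \<omega>) \<partial>M) - (\<integral>\<omega>. e i \<partial>M)"
    unfolding u_def using tr_int[of "\<lambda>x. x" i i] by (subst Bochner_Integration.integral_diff) auto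
  also have "(\<integral>\<omega>. tr i (Y i \<omega>) \<partial>M) = e i" unfolding e_def by (rule exp_eq)
  finally show ?thesis by (simp add: prob_space)
qed

lemma u_cross: "i \<noteq> j \<Longrightarrow> (\<integral>\<omega>. u i \<omega> * u j \<omega> \<partial>M) = 0"
proof -
  assume ij: "i \<noteq> j"
  have "indep_var borel (\<lambda>\<omega>. (\<lambda>y. tr i y - e i) (Y i \<omega>)) borel (\<lambda>\<omega>. (\<lambda>y. tr j y - e j) (Y j \<omega>))"
    by (rule Yind[OF ij])
  then have ind: "indep_var borel (u i) borel (u j)" unfolding u_def[abs_def] by simp
  show ?thesis using indep_var_lebesgue_integral[OF ind u_int u_int] u_mean by simp
qed

lemma u_sq: "(\<integral>\<omega>. u i \<omega> * u i \<omega> \<partial>M) \<le> v i"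
proof -
  have T2: "integrable M (\<lambda>\<omega>. (tr i (Y i \<omega>))\<^sup>2)" using tr_int[of "\<lambda>x. x\<^sup>2" i i] by simp
  have T1: "integrable M (\<lambda>\<omega>. tr i (Y i \<omega>))" using tr_int[of "\<lambda>x. x" i i] by simp
  have eq: "(\<lambda>\<omega>. u i \<omega> * u i \<omega>) = (\<lambda>\<omega>. (tr i (Y i \<omega>))\<^sup>2 - 2 * e i * tr i (Y i \<omega>) + (e i)\<^sup>2)"
    by (auto simp: u_def power2_eq_square algebra_simps)
  have "(\<integral>\<omega>. u i \<omega> * u i \<omega> \<partial>M) = (\<integral>\<omega>. (tr i (Y i \<omega>))\<^sup>2 \<partial>M) - 2 * e i * (\<integral>\<omega>. tr i (Y i \<omega>) \<partial>M) + (e i)\<^sup>2"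
    unfolding eq using T1 T2 by (simp add: prob_space)
  also have "(\<integral>\<omega>. tr i (Y i \<omega>) \<partial>M) = e i" unfolding e_def by (rule exp_eq)
  also have "(\<integral>\<omega>. (tr i (Y i \<omega>))\<^sup>2 \<partial>M) = v i" unfolding v_def by (rule exp_eq[where f="\<lambda>y. (tr i y)\<^sup>2"])
  finally show ?thesis by (simp add: power2_eq_square)
qed

lemma var_sum: "(\<integral>\<omega>. (\<Sum>k<n. u k \<omega>)\<^sup>2 \<partial>M) \<le> (\<Sum>k<n. v k)"
proof -
  have "(\<lambda>\<omega>. (\<Sum>k<n. u k \<omega>)\<^sup>2) = (\<lambda>\<omega>. \<Sum>i<n. \<Sum>j<n. u i \<omega> * u j \<omega>)"
    by (auto simp: power2_eq_square sum_product)
  then have "(\<integral>\<omega>. (\<Sum>k<n. u k \<omega>)\<^sup>2 \<partial>M) = (\<Sum>i<n. \<Sum>j<n. \<integral>\<omega>. u i \<omega> * u j \<omega> \<partial>M)"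
    by (simp add: Bochner_Integration.integral_sum Bochner_Integration.integrable_sum u_prod_int)
  also have "\<dots> = (\<Sum>i<n. \<integral>\<omega>. u i \<omega> * u i \<omega> \<partial>M)"
  proof (rule sum.cong[OF refl])
    fix i assume i: "i \<in> {..<n}"
    have "(\<Sum>j<n. \<integral>\<omega>. u i \<omega> * u j \<omega> \<partial>M) = (\<Sum>j<n. if j = i then \<integral>\<omega>. u i \<omega> * u i \<omega> \<partial>M else 0)"
      by (rule sum.cong) (auto simp: u_cross)
    also have "\<dots> = (\<integral>\<omega>. u i \<omega> * u i \<omega> \<partial>M)" using i by (subst sum.delta) auto
    finally show "(\<Sum>j<n. \<integral>\<omega>. u i \<omega> * u j \<omega> \<partial>M) = (\<integral>\<omega>. u i \<omega> * u i \<omega> \<partial>M)" .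
  qed
  also have "\<dots> \<le> (\<Sum>k<n. v k)" by (intro sum_mono u_sq)
  finally show ?thesis .
qed

lemma tele_aux: "y \<le> N \<Longrightarrow> 1 \<le> y \<Longrightarrow> (\<Sum>k\<in>{y..<N}. 1 / (real k + 1)\<^sup>2) \<le> 1 / real y - 1 / real N"
proof (induction N rule: dec_induct)
  case base then show ?case by simp
next
  case (step N)
  have N1: "real N \<ge> 1" using step by simp
  have "1 / (real N + 1)\<^sup>2 \<le> 1 / real N - 1 / real (Suc N)"
  proof -
    have "1 / real N - 1 / real (Suc N) = 1 / (real N * (real N + 1))" using N1 by (simp add: field_simps)
    also have "1 / (real N + 1)\<^sup>2 \<le> 1 / (real N * (real N + 1))"
      using N1 by (intro divide_left_mono) (auto simp: power2_eq_square intro!: mult_right_mono)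
    finally show ?thesis by simp
  qed
  then show ?case using step by (simp add: sum.atLeastLessThan_Suc)
qed

lemma tele: "1 \<le> y \<Longrightarrow> (\<Sum>k\<in>{y..<N}. 1 / (real k + 1)\<^sup>2) \<le> 1 / real y"
proof (cases "y \<le> N")
  case True
  assume y: "1 \<le> y"
  have "1 / real N \<ge> 0" by simp
  then show ?thesis using tele_aux[OF True y] by linarith
qed simp

lemma pw_bound: "(\<Sum>k<N. (tr k y)\<^sup>2 / (real k + 1)\<^sup>2) \<le> real y"
proof (cases "y = 0")
  case True then show ?thesis by (simp add: tr_def)
next
  case False
  then have y1: "1 \<le> y" by simp
  have "(\<Sum>k<N. (tr k y)\<^sup>2 / (real k + 1)\<^sup>2) = (\<Sum>k<N. if y \<le> k then (real y)\<^sup>2 * (1 / (real k + 1)\<^sup>2) else 0)"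
    by (rule sum.cong) (auto simp: tr_def)
  also have "\<dots> = (\<Sum>k\<in>{k\<in>{..<N}. y \<le> k}. (real y)\<^sup>2 * (1 / (real k + 1)\<^sup>2))"
    by (rule sum.inter_filter[symmetric]) simp
  also have "{k\<in>{..<N}. y \<le> k} = {y..<N}" by auto
  also have "(\<Sum>k\<in>{y..<N}. (real y)\<^sup>2 * (1 / (real k + 1)\<^sup>2)) = (real y)\<^sup>2 * (\<Sum>k\<in>{y..<N}. 1 / (real k + 1)\<^sup>2)"
    by (simp add: sum_distrib_left)
  also have "\<dots> \<le> (real y)\<^sup>2 * (1 / real y)" by (intro mult_left_mono tele y1) auto
  also have "\<dots> = real y" using y1 by (simp add: power2_eq_square)
  finally show ?thesis .
qed

lemma v_nonneg: "0 \<le> v k" unfolding v_def by simp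

lemma v_weighted: "(\<Sum>k<N. v k / (real k + 1)\<^sup>2) \<le> \<mu>"
proof -
  have "(\<Sum>k<N. v k / (real k + 1)\<^sup>2) = (\<Sum>k<N. \<integral>\<omega>. (tr k (Y 0 \<omega>))\<^sup>2 / (real k + 1)\<^sup>2 \<partial>M)"
    unfolding v_def by simp
  also have "\<dots> = (\<integral>\<omega>. (\<Sum>k<N. (tr k (Y 0 \<omega>))\<^sup>2 / (real k + 1)\<^sup>2) \<partial>M)"
    by (rule Bochner_Integration.integral_sum[symmetric]) (rule tr_int[of "\<lambda>x. x\<^sup>2 / (real _ + 1)\<^sup>2"])
  also have "\<dots> \<le> \<mu>" unfolding \<mu>_def
    by (rule integral_mono) (auto intro!: Bochner_Integration.integrable_sum Yint pw_bound tr_int[of "\<lambda>x. x\<^sup>2 / (real _ + 1)\<^sup>2"])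
  finally show ?thesis .
qed

lemma kseq_sq_bound:
  assumes a: "a > 1"
  shows "1 / (real (kseq a j))\<^sup>2 \<le> 4 * (1 / a\<^sup>2) ^ j"
proof -
  have k1: "1 \<le> real (kseq a j)" using kseq_ge1[of a j] a by simp
  have "a ^ j < real (kseq a j) + 1" using kseq_gt[of a j] a by simp
  also have "\<dots> \<le> 2 * real (kseq a j)" using k1 by simp
  finally have "a ^ j \<le> 2 * real (kseq a j)" by simp
  then have "(a ^ j)\<^sup>2 \<le> (2 * real (kseq a j))\<^sup>2" using a by (intro power_mono) auto
  then have "(a\<^sup>2) ^ j \<le> 4 * (real (kseq a j))\<^sup>2" by (simp add: power_mult_distrib power_even_eq[symmetric] power_mult[symmetric] mult.commute)
  moreover have "0 < (a\<^sup>2) ^ j * (4 * (real (kseq a j))\<^sup>2)" using a k1 by (intro mult_pos_pos) auto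
  ultimately have "1 / (4 * (real (kseq a j))\<^sup>2) \<le> 1 / (a\<^sup>2) ^ j" by (intro divide_left_mono) auto
  then show ?thesis using k1 by (simp add: power_one_over field_simps)
qed

lemma w_bound:
  assumes a: "a > 1"
  shows "(\<Sum>j<J. if k < kseq a j then 1 / (real (kseq a j))\<^sup>2 else 0) \<le> (4 / (1 - 1 / a\<^sup>2)) / (real k + 1)\<^sup>2"
proof -
  define \<beta> where "\<beta> = 1 / a\<^sup>2"
  have \<beta>0: "0 < \<beta>" and \<beta>1: "\<beta> < 1" using a by (auto simp: \<beta>_def)
  define F where "F = {j\<in>{..<J}. k < kseq a j}"
  have "(\<Sum>j<J. if k < kseq a j then 1 / (real (kseq a j))\<^sup>2 else 0) = (\<Sum>j\<in>F. 1 / (real (kseq a j))\<^sup>2)"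
    unfolding F_def by (rule sum.inter_filter[symmetric]) simp
  also have "\<dots> \<le> (4 / (1 - \<beta>)) / (real k + 1)\<^sup>2"
  proof (cases "F = {}")
    case True then show ?thesis using \<beta>1 by simp
  next
    case False
    have fF: "finite F" by (simp add: F_def)
    define j0 where "j0 = Min F"
    have j0F: "j0 \<in> F" using fF False by (simp add: j0_def)
    have j0le: "\<And>j. j \<in> F \<Longrightarrow> j0 \<le> j" using fF by (simp add: j0_def)
    have "real k + 1 \<le> real (kseq a j0)" using j0F by (simp add: F_def)
    also have "\<dots> \<le> a ^ j0" using kseq_le a by simp
    finally have kj: "real k + 1 \<le> a ^ j0" .
    have bj0: "\<beta> ^ j0 \<le> 1 / (real k + 1)\<^sup>2"
    proof -
      have "(real k + 1)\<^sup>2 \<le> (a ^ j0)\<^sup>2" using kj by (intro power_mono) auto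
      moreover have "0 < (a ^ j0)\<^sup>2 * (real k + 1)\<^sup>2" using a by (intro mult_pos_pos) auto
      ultimately have "1 / (a ^ j0)\<^sup>2 \<le> 1 / (real k + 1)\<^sup>2" by (intro divide_left_mono) auto
      moreover have "\<beta> ^ j0 = 1 / (a ^ j0)\<^sup>2" by (simp add: \<beta>_def power_one_over power_mult[symmetric] power_even_eq mult.commute)
      ultimately show ?thesis by simp
    qed
    have "(\<Sum>j\<in>F. 1 / (real (kseq a j))\<^sup>2) \<le> (\<Sum>j\<in>F. 4 * \<beta> ^ j)"
      by (intro sum_mono) (use kseq_sq_bound[OF a] in \<open>simp add: \<beta>_def\<close>)
    also have "\<dots> \<le> (\<Sum>j\<in>{j0..<J}. 4 * \<beta> ^ j)"
      using j0le \<beta>0 by (intro sum_mono2) (auto simp: F_def)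
    also have "\<dots> = 4 * \<beta> ^ j0 * (\<Sum>i<J - j0. \<beta> ^ i)"
    proof (cases "j0 \<le> J")
      case True
      have "(\<Sum>j\<in>{j0..<J}. 4 * \<beta> ^ j) = (\<Sum>i\<in>{0..<J - j0}. 4 * \<beta> ^ (i + j0))"
        using True sum.shift_bounds_nat_ivl[of "\<lambda>j. 4 * \<beta> ^ j" 0 j0 "J - j0"] by simp
      also have "\<dots> = 4 * \<beta> ^ j0 * (\<Sum>i<J - j0. \<beta> ^ i)"
        by (simp add: power_add sum_distrib_left atLeast0LessThan mult_ac)
      finally show ?thesis .
    qed simp
    also have "\<dots> \<le> 4 * \<beta> ^ j0 * (1 / (1 - \<beta>))"
    proof -
      have "(\<Sum>i<J - j0. \<beta> ^ i) = (1 - \<beta> ^ (J - j0)) / (1 - \<beta>)" using \<beta>1 by (subst sum_gp_strict) auto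
      also have "\<dots> \<le> 1 / (1 - \<beta>)" using \<beta>0 \<beta>1 by (intro divide_right_mono) auto
      finally show ?thesis using \<beta>0 by (intro mult_left_mono) auto
    qed
    also have "\<dots> \<le> 4 * (1 / (real k + 1)\<^sup>2) * (1 / (1 - \<beta>))"
      using bj0 \<beta>1 by (intro mult_right_mono mult_left_mono) auto
    also have "\<dots> = (4 / (1 - \<beta>)) / (real k + 1)\<^sup>2" by simp
    finally show ?thesis .
  qed
  finally show ?thesis by (simp add: \<beta>_def)
qed

lemma partial_bound:
  assumes a: "a > 1"
  shows "(\<Sum>j<J. (\<Sum>k<kseq a j. v k) / (real (kseq a j))\<^sup>2) \<le> (4 / (1 - 1 / a\<^sup>2)) * \<mu>"
proof -
  define C where "C = 4 / (1 - 1 / a\<^sup>2)"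
  have C0: "0 \<le> C" using a by (simp add: C_def)
  define K where "K = kseq a J"
  have Kj: "j < J \<Longrightarrow> kseq a j \<le> K" for j unfolding K_def using a by (intro kseq_mono) auto
  have "(\<Sum>j<J. (\<Sum>k<kseq a j. v k) / (real (kseq a j))\<^sup>2)
      = (\<Sum>j<J. \<Sum>k<K. if k < kseq a j then v k * (1 / (real (kseq a j))\<^sup>2) else 0)"
  proof (rule sum.cong[OF refl])
    fix j assume "j \<in> {..<J}"
    then have sub: "{..<kseq a j} \<subseteq> {..<K}" using Kj by auto
    have "(\<Sum>k<K. if k < kseq a j then v k * (1 / (real (kseq a j))\<^sup>2) else 0)
        = (\<Sum>k\<in>{k\<in>{..<K}. k < kseq a j}. v k * (1 / (real (kseq a j))\<^sup>2))"
      by (rule sum.inter_filter[symmetric]) simp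
    also have "{k\<in>{..<K}. k < kseq a j} = {..<kseq a j}" using sub by auto
    finally show "(\<Sum>k<kseq a j. v k) / (real (kseq a j))\<^sup>2 = (\<Sum>k<K. if k < kseq a j then v k * (1 / (real (kseq a j))\<^sup>2) else 0)"
      by (simp add: sum_divide_distrib)
  qed
  also have "\<dots> = (\<Sum>k<K. \<Sum>j<J. if k < kseq a j then v k * (1 / (real (kseq a j))\<^sup>2) else 0)"
    by (rule sum.swap)
  also have "\<dots> = (\<Sum>k<K. v k * (\<Sum>j<J. if k < kseq a j then 1 / (real (kseq a j))\<^sup>2 else 0))"
    by (intro sum.cong refl) (auto simp: sum_distrib_left intro!: sum.cong)
  also have "\<dots> \<le> (\<Sum>k<K. v k * (C / (real k + 1)\<^sup>2))"
    by (intro sum_mono mult_left_mono v_nonneg) (use w_bound[OF a] in \<open>simp add: C_def\<close>)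
  also have "\<dots> = C * (\<Sum>k<K. v k / (real k + 1)\<^sup>2)" by (simp add: sum_distrib_left mult.commute)
  also have "\<dots> \<le> C * \<mu>" by (intro mult_left_mono v_weighted C0)
  finally show ?thesis by (simp add: C_def)
qed

lemma kseq_filterlim: "a > 1 \<Longrightarrow> filterlim (kseq a) at_top sequentially"
  unfolding filterlim_at_top eventually_sequentially
proof
  fix Z :: nat assume a: "a > 1"
  obtain j0 where "Z < kseq a j0" using kseq_unbounded[OF a] by blast
  then show "\<exists>N. \<forall>n\<ge>N. Z \<le> kseq a n" using kseq_mono[of a] a
    by (metis less_imp_le_nat less_le_trans less_eq_real_def)
qed

lemma sub_trunc:
  assumes a: "a > 1"
  shows "AE \<omega> in M. (\<lambda>j. (\<Sum>k<kseq a j. tr k (Y k \<omega>)) / real (kseq a j)) \<longlonglongrightarrow> \<mu>"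
proof -
  define W where "W j \<omega> = (\<Sum>k<kseq a j. u k \<omega>) / real (kseq a j)" for j \<omega>
  have Wm[measurable]: "W j \<in> borel_measurable M" for j unfolding W_def by measurable
  have W2: "(\<lambda>\<omega>. W j \<omega> ^ 2) = (\<lambda>\<omega>. (\<Sum>i<kseq a j. \<Sum>l<kseq a j. u i \<omega> * u l \<omega>) / (real (kseq a j))\<^sup>2)" for j
    by (auto simp: W_def power2_eq_square sum_product)
  have W2i: "integrable M (\<lambda>\<omega>. W j \<omega> ^ 2)" for j
    unfolding W2 by (intro integrable_divide Bochner_Integration.integrable_sum u_prod_int)
  have EW: "(\<integral>\<omega>. W j \<omega> ^ 2 \<partial>M) \<le> (\<Sum>k<kseq a j. v k) / (real (kseq a j))\<^sup>2" for j
  proof -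
    have "(\<integral>\<omega>. W j \<omega> ^ 2 \<partial>M) = (\<integral>\<omega>. (\<Sum>k<kseq a j. u k \<omega>)\<^sup>2 \<partial>M) / (real (kseq a j))\<^sup>2"
      by (simp add: W_def power_divide)
    also have "\<dots> \<le> (\<Sum>k<kseq a j. v k) / (real (kseq a j))\<^sup>2"
      by (intro divide_right_mono var_sum) auto
    finally show ?thesis .
  qed
  have summ1: "summable (\<lambda>j. (\<Sum>k<kseq a j. v k) / (real (kseq a j))\<^sup>2)"
  proof (rule summableI_nonneg_bounded)
    show "(\<Sum>j<n. (\<Sum>k<kseq a j. v k) / (real (kseq a j))\<^sup>2) \<le> (4 / (1 - 1 / a\<^sup>2)) * \<mu>" for n
      by (rule partial_bound[OF a])
  qed (auto intro!: divide_nonneg_nonneg sum_nonneg v_nonneg)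
  have summ: "summable (\<lambda>j. \<integral>\<omega>. W j \<omega> ^ 2 \<partial>M)"
    by (rule summable_comparison_test[OF _ summ1]) (auto intro!: exI[of _ 0] EW)
  have W0: "AE \<omega> in M. (\<lambda>j. W j \<omega>) \<longlonglongrightarrow> 0"
    by (rule ae_zero_of_summable_sq[OF prob_space_axioms Wm W2i summ])
  have ce: "(\<lambda>j. (\<Sum>k<kseq a j. e k) / real (kseq a j)) \<longlonglongrightarrow> \<mu>"
    using filterlim_compose[OF cesaro_e kseq_filterlim[OF a]] by simp
  show ?thesis using W0
  proof (rule eventually_mono)
    fix \<omega> assume "(\<lambda>j. W j \<omega>) \<longlonglongrightarrow> 0"
    then have "(\<lambda>j. W j \<omega> + (\<Sum>k<kseq a j. e k) / real (kseq a j)) \<longlonglongrightarrow> 0 + \<mu>"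
      by (intro tendsto_add ce)
    moreover have "W j \<omega> + (\<Sum>k<kseq a j. e k) / real (kseq a j) = (\<Sum>k<kseq a j. tr k (Y k \<omega>)) / real (kseq a j)" for j
      by (simp add: W_def u_def sum_subtractf add_divide_distrib[symmetric])
    ultimately show "(\<lambda>j. (\<Sum>k<kseq a j. tr k (Y k \<omega>)) / real (kseq a j)) \<longlonglongrightarrow> \<mu>" by simp
  qed
qed

lemma diff_tendsto: "AE \<omega> in M. (\<lambda>n. (\<Sum>k<n. real (Y k \<omega>) - tr k (Y k \<omega>)) / real n) \<longlonglongrightarrow> 0"
  using ae_trunc
proof (rule eventually_mono)
  fix \<omega> assume "eventually (\<lambda>k. Y k \<omega> \<le> k) sequentially"
  then obtain N where N: "\<And>k. k \<ge> N \<Longrightarrow> Y k \<omega> \<le> k" unfolding eventually_sequentially by blast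
  define c where "c = (\<Sum>k<N. real (Y k \<omega>) - tr k (Y k \<omega>))"
  have eq: "(\<Sum>k<n. real (Y k \<omega>) - tr k (Y k \<omega>)) = c" if "n \<ge> N" for n
  proof -
    have "(\<Sum>k<n. real (Y k \<omega>) - tr k (Y k \<omega>)) = c + (\<Sum>k\<in>{N..<n}. real (Y k \<omega>) - tr k (Y k \<omega>))"
      unfolding c_def using sum.atLeastLessThan_concat[of 0 N n "\<lambda>k. real (Y k \<omega>) - tr k (Y k \<omega>)"] that
      by (simp add: lessThan_atLeast0)
    also have "(\<Sum>k\<in>{N..<n}. real (Y k \<omega>) - tr k (Y k \<omega>)) = 0"
      by (intro sum.neutral) (auto simp: tr_def N)
    finally show ?thesis by simp
  qed
  have "(\<lambda>n. c / real n) \<longlonglongrightarrow> 0" by (rule lim_const_over_n)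
  moreover have "eventually (\<lambda>n. c / real n = (\<Sum>k<n. real (Y k \<omega>) - tr k (Y k \<omega>)) / real n) sequentially"
    unfolding eventually_sequentially using eq by auto
  ultimately show "(\<lambda>n. (\<Sum>k<n. real (Y k \<omega>) - tr k (Y k \<omega>)) / real n) \<longlonglongrightarrow> 0"
    by (rule Lim_transform_eventually)
qed

lemma sub_full:
  assumes a: "a > 1"
  shows "AE \<omega> in M. (\<lambda>j. (\<Sum>k<kseq a j. real (Y k \<omega>)) / real (kseq a j)) \<longlonglongrightarrow> \<mu>"
  using sub_trunc[OF a] diff_tendsto
proof (eventually_elim)
  case (elim \<omega>)
  have d: "(\<lambda>j. (\<Sum>k<kseq a j. real (Y k \<omega>) - tr k (Y k \<omega>)) / real (kseq a j)) \<longlonglongrightarrow> 0"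
    using filterlim_compose[OF elim(2) kseq_filterlim[OF a]] by simp
  have "(\<lambda>j. (\<Sum>k<kseq a j. tr k (Y k \<omega>)) / real (kseq a j) + (\<Sum>k<kseq a j. real (Y k \<omega>) - tr k (Y k \<omega>)) / real (kseq a j)) \<longlonglongrightarrow> \<mu> + 0"
    by (intro tendsto_add elim(1) d)
  moreover have "(\<Sum>k<kseq a j. tr k (Y k \<omega>)) / real (kseq a j) + (\<Sum>k<kseq a j. real (Y k \<omega>) - tr k (Y k \<omega>)) / real (kseq a j)
      = (\<Sum>k<kseq a j. real (Y k \<omega>)) / real (kseq a j)" for j
    by (simp add: sum_subtractf add_divide_distrib[symmetric])
  ultimately show ?case by simp
qed

theorem slln: "AE \<omega> in M. (\<lambda>n. (\<Sum>k<n. real (Y k \<omega>)) / real n) \<longlonglongrightarrow> \<mu>"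
proof -
  have "AE \<omega> in M. \<forall>m. (\<lambda>j. (\<Sum>k<kseq (1 + 1 / real (Suc m)) j. real (Y k \<omega>)) / real (kseq (1 + 1 / real (Suc m)) j)) \<longlonglongrightarrow> \<mu>"
    by (subst AE_all_countable) (auto intro!: sub_full)
  then show ?thesis
  proof (rule eventually_mono)
    fix \<omega> assume H: "\<forall>m. (\<lambda>j. (\<Sum>k<kseq (1 + 1 / real (Suc m)) j. real (Y k \<omega>)) / real (kseq (1 + 1 / real (Suc m)) j)) \<longlonglongrightarrow> \<mu>"
    show "(\<lambda>n. (\<Sum>k<n. real (Y k \<omega>)) / real n) \<longlonglongrightarrow> \<mu>"
    proof (rule interp[where s="\<lambda>n. \<Sum>k<n. real (Y k \<omega>)"])
      show "mono (\<lambda>n. \<Sum>k<n. real (Y k \<omega>))"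
        by (intro monoI sum_mono2) auto
    qed (use H in \<open>auto intro: sum_nonneg\<close>)
  qed
qed

end

context model
begin

lemma zv_Inl[simp]: "zv \<omega> (Inl k) = X k \<omega>" by (simp add: zv_def Zf_def)
lemma zv_Inr[simp]: "zv \<omega> (Inr k) = S k \<omega>" by (simp add: zv_def Zf_def)

lemma local_on_comp2: "local_on A \<Phi> \<Longrightarrow> local_on A \<Psi> \<Longrightarrow> local_on A (\<lambda>z. F (\<Phi> z) (\<Psi> z))"
  unfolding local_on_def by metis

lemma local_on_comp1: "local_on A \<Phi> \<Longrightarrow> local_on A (\<lambda>z. F (\<Phi> z))"
  unfolding local_on_def by metis

lemma local_on_mono: "A \<subseteq> B \<Longrightarrow> local_on A \<Phi> \<Longrightarrow> local_on B \<Phi>"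
  unfolding local_on_def by blast

lemma local_on_pt: "k \<in> A \<Longrightarrow> local_on A (\<lambda>z. F (z (Inl k)) (z (Inr k)))"
  unfolding local_on_def by auto

lemma local_on_const: "local_on A (\<lambda>z. c)"
  unfolding local_on_def by auto

lemma pair_fun_meas[measurable]: "(\<lambda>\<omega>. \<phi> (X k \<omega>) (S k \<omega>) :: nat) \<in> measurable M (count_space UNIV)"
proof -
  have "(\<lambda>\<omega>. \<phi> a (S k \<omega>)) \<in> measurable M (count_space UNIV)" for a
    by (rule measurable_compose[OF S_meas]) simp
  then show ?thesis
    using measurable_compose_countable[where f="\<lambda>a \<omega>. \<phi> a (S k \<omega>)" and g="X k" and M=M and N="count_space UNIV"]
    by simp
qed

lemma iid_fun:
  fixes \<phi> :: "nat \<Rightarrow> nat \<Rightarrow> nat"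
  assumes int: "integrable M (\<lambda>\<omega>. real (\<phi> (X 0 \<omega>) (S 0 \<omega>)))"
  shows "iidn M (\<lambda>k \<omega>. \<phi> (X k \<omega>) (S k \<omega>))"
proof (unfold_locales)
  show "(\<lambda>\<omega>. \<phi> (X k \<omega>) (S k \<omega>)) \<in> measurable M (count_space UNIV)" for k by simp
  show "distr M (count_space UNIV) (\<lambda>\<omega>. \<phi> (X k \<omega>) (S k \<omega>)) = distr M (count_space UNIV) (\<lambda>\<omega>. \<phi> (X 0 \<omega>) (S 0 \<omega>))" for k
    by (rule fun_distr_eq)
  show "integrable M (\<lambda>\<omega>. real (\<phi> (X 0 \<omega>) (S 0 \<omega>)))" by (rule int)
  fix i j :: nat and f g :: "nat \<Rightarrow> real" assume ij: "i \<noteq> j"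
  have "indep_var borel (\<lambda>\<omega>. (\<lambda>z. f (\<phi> (z (Inl i)) (z (Inr i)))) (zv \<omega>)) borel (\<lambda>\<omega>. (\<lambda>z. g (\<phi> (z (Inl j)) (z (Inr j)))) (zv \<omega>))"
    by (rule block_indep[of "{i}" "{j}"]) (use ij in \<open>auto intro: local_on_pt\<close>)
  then show "indep_var borel (\<lambda>\<omega>. f (\<phi> (X i \<omega>) (S i \<omega>))) borel (\<lambda>\<omega>. g (\<phi> (X j \<omega>) (S j \<omega>)))" by simp
qed

lemma slln_fun:
  fixes \<phi> :: "nat \<Rightarrow> nat \<Rightarrow> nat"
  assumes int: "integrable M (\<lambda>\<omega>. real (\<phi> (X 0 \<omega>) (S 0 \<omega>)))"
  shows "AE \<omega> in M. (\<lambda>n. (\<Sum>k<n. real (\<phi> (X k \<omega>) (S k \<omega>))) / real n) \<longlonglongrightarrow> (\<integral>\<omega>. real (\<phi> (X 0 \<omega>) (S 0 \<omega>)) \<partial>M)"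
proof -
  interpret I: iidn M "\<lambda>k \<omega>. \<phi> (X k \<omega>) (S k \<omega>)" by (rule iid_fun[OF int])
  show ?thesis using I.slln unfolding I.\<mu>_def .
qed

lemma pair_meas[measurable]: "(\<lambda>\<omega>. (X k \<omega>, S k \<omega>)) \<in> measurable M (count_space UNIV)"
proof -
  have "(\<lambda>\<omega>. Pair a (S k \<omega>)) \<in> measurable M (count_space UNIV)" for a
    by (rule measurable_compose[OF S_meas]) simp
  then show ?thesis
    using measurable_compose_countable[where f="\<lambda>a \<omega>. Pair a (S k \<omega>)" and g="X k" and M=M and N="count_space UNIV"]
    by simp
qed

lemma pair_distr: "distr M (count_space UNIV) (\<lambda>\<omega>. (X k \<omega>, S k \<omega>)) = distr M (count_space UNIV) (\<lambda>\<omega>. (X 0 \<omega>, S 0 \<omega>))"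
proof (rule measure_eqI_countable)
  fix ab :: "nat \<times> nat"
  obtain a b where ab: "ab = (a, b)" by force
  have "emeasure (distr M (count_space UNIV) (\<lambda>\<omega>. (X j \<omega>, S j \<omega>))) {ab} = prob {\<omega>\<in>space M. X j \<omega> = a \<and> S j \<omega> = b}" for j
    by (simp add: emeasure_distr emeasure_eq_measure ab vimage_def Int_def conj_commute)
  then show "emeasure (distr M (count_space UNIV) (\<lambda>\<omega>. (X k \<omega>, S k \<omega>))) {ab} = emeasure (distr M (count_space UNIV) (\<lambda>\<omega>. (X 0 \<omega>, S 0 \<omega>))) {ab}"
    using joint_eq by simp
qed auto

lemma exp_pair: "(\<integral>\<omega>. (F::nat \<Rightarrow> nat \<Rightarrow> real) (X k \<omega>) (S k \<omega>) \<partial>M) = (\<integral>\<omega>. F (X 0 \<omega>) (S 0 \<omega>) \<partial>M)"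
proof -
  have "(\<integral>\<omega>. F (X j \<omega>) (S j \<omega>) \<partial>M) = integral\<^sup>L (distr M (count_space UNIV) (\<lambda>\<omega>. (X j \<omega>, S j \<omega>))) (case_prod F)" for j
    by (subst integral_distr) auto
  then show ?thesis using pair_distr[of k] by simp
qed

lemma int_pair: "integrable M (\<lambda>\<omega>. (F::nat \<Rightarrow> nat \<Rightarrow> real) (X k \<omega>) (S k \<omega>)) \<longleftrightarrow> integrable M (\<lambda>\<omega>. F (X 0 \<omega>) (S 0 \<omega>))"
proof -
  have "integrable M (\<lambda>\<omega>. F (X j \<omega>) (S j \<omega>)) \<longleftrightarrow> integrable (distr M (count_space UNIV) (\<lambda>\<omega>. (X j \<omega>, S j \<omega>))) (case_prod F)" for j
    by (subst integrable_distr_eq) auto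
  then show ?thesis using pair_distr[of k] by simp
qed

lemma pairF_meas[measurable]: "(\<lambda>\<omega>. (F::nat \<Rightarrow> nat \<Rightarrow> real) (X k \<omega>) (S k \<omega>)) \<in> borel_measurable M"
proof -
  have "(\<lambda>\<omega>. case_prod F (X k \<omega>, S k \<omega>)) \<in> borel_measurable M"
    by (rule measurable_compose[OF pair_meas]) simp
  then show ?thesis by simp
qed

end

lemma sq_sum_le: "(a + b)\<^sup>2 \<le> 2 * a\<^sup>2 + 2 * (b::real)\<^sup>2"
proof -
  have "(a + b)\<^sup>2 + (a - b)\<^sup>2 = 2 * a\<^sup>2 + 2 * b\<^sup>2" by (simp add: power2_sum power2_diff)
  moreover have "0 \<le> (a - b)\<^sup>2" by simp
  ultimately show ?thesis by linarith
qed

lemma kseq_inv: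
  assumes a: "a > 1"
  shows "1 / real (kseq a j) \<le> 2 * (1 / a) ^ j"
proof -
  have k1: "1 \<le> real (kseq a j)" using kseq_ge1[of a j] a by simp
  have "a ^ j < real (kseq a j) + 1" using kseq_gt[of a j] a by simp
  also have "\<dots> \<le> 2 * real (kseq a j)" using k1 by simp
  finally have "a ^ j \<le> 2 * real (kseq a j)" by simp
  moreover have "0 < a ^ j * (2 * real (kseq a j))" using a k1 by (intro mult_pos_pos) auto
  ultimately have "1 / (2 * real (kseq a j)) \<le> 1 / a ^ j" by (intro divide_left_mono) auto
  then show ?thesis by (simp add: power_one_over field_simps)
qed

lemma kseq_filterlim': "a > 1 \<Longrightarrow> filterlim (kseq a) at_top sequentially"
  unfolding filterlim_at_top eventually_sequentially
proof
  fix Z :: nat assume a: "a > 1"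
  obtain j0 where "Z < kseq a j0" using kseq_unbounded[OF a] by blast
  then show "\<exists>N. \<forall>n\<ge>N. Z \<le> kseq a n" using kseq_mono[of a] a
    by (metis less_imp_le_nat less_le_trans less_eq_real_def)
qed

lemma afun_local: "(\<And>k. k < n \<Longrightarrow> xs k = xs' k \<and> ss k = ss' k) \<Longrightarrow> afun xs ss n = afun xs' ss' n"
  by (induction n) auto

context model
begin

definition Az :: "nat \<Rightarrow> (nat + nat \<Rightarrow> nat) \<Rightarrow> real" where
  "Az n z = real (afun (\<lambda>k. z (Inl k)) (\<lambda>k. z (Inr k)) n)"

definition aa :: "nat \<Rightarrow> 'a \<Rightarrow> real" where
  "aa n \<omega> = real (afun (\<lambda>k. X k \<omega>) (\<lambda>k. S k \<omega>) n)"

lemma Az_zv[simp]: "Az n (zv \<omega>) = aa n \<omega>"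
  by (simp add: Az_def aa_def)

lemma Az_local: "local_on {..<n} (Az n)"
  unfolding local_on_def Az_def by (auto intro!: arg_cong[where f=real] afun_local)

lemma aa_meas[measurable]: "aa n \<in> borel_measurable M"
proof -
  have "(\<lambda>\<omega>. Az n (zv \<omega>)) \<in> borel_measurable M" by (rule zv_meas_fun[OF _ Az_local]) simp
  then show ?thesis by simp
qed

lemma aa_0: "aa 0 \<omega> = 1" by (simp add: aa_def)

lemma aa_rec: "aa (Suc n) \<omega> = real (X n \<omega>) + (if S n \<omega> \<le> X n \<omega> then 0 else aa n \<omega>)"
  by (simp add: aa_def)

lemma aa_ge1: "\<omega> \<in> space M \<Longrightarrow> 1 \<le> aa n \<omega>"
proof (induction n)
  case 0 then show ?case by (simp add: aa_0)
next
  case (Suc n) then show ?case using X_pos[of \<omega> n] by (simp add: aa_rec)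
qed

lemma indep_split:
  fixes \<Phi> \<Psi> :: "(nat + nat \<Rightarrow> nat) \<Rightarrow> real"
  assumes "local_on {..<n} \<Phi>" "local_on {n} \<Psi>"
    and "integrable M (\<lambda>\<omega>. \<Phi> (zv \<omega>))" "integrable M (\<lambda>\<omega>. \<Psi> (zv \<omega>))"
  shows "integrable M (\<lambda>\<omega>. \<Phi> (zv \<omega>) * \<Psi> (zv \<omega>))"
    and "(\<integral>\<omega>. \<Phi> (zv \<omega>) * \<Psi> (zv \<omega>) \<partial>M) = (\<integral>\<omega>. \<Phi> (zv \<omega>) \<partial>M) * (\<integral>\<omega>. \<Psi> (zv \<omega>) \<partial>M)"
proof -
  have iv: "indep_var borel (\<lambda>\<omega>. \<Phi> (zv \<omega>)) borel (\<lambda>\<omega>. \<Psi> (zv \<omega>))"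
    by (rule block_indep) (use assms in auto)
  show "integrable M (\<lambda>\<omega>. \<Phi> (zv \<omega>) * \<Psi> (zv \<omega>))" by (rule indep_var_integrable[OF iv assms(3,4)])
  show "(\<integral>\<omega>. \<Phi> (zv \<omega>) * \<Psi> (zv \<omega>) \<partial>M) = (\<integral>\<omega>. \<Phi> (zv \<omega>) \<partial>M) * (\<integral>\<omega>. \<Psi> (zv \<omega>) \<partial>M)"
    by (rule indep_var_lebesgue_integral[OF iv assms(3,4)])
qed

end

locale model2 = model +
  assumes X2int: "integrable M (\<lambda>\<omega>. (real (X 0 \<omega>))\<^sup>2)"
    and ppos: "prob {\<omega>\<in>space M. S 0 \<omega> \<le> X 0 \<omega>} > 0"
begin

definition p where "p = prob {\<omega>\<in>space M. S 0 \<omega> \<le> X 0 \<omega>}"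
definition mx where "mx = (\<integral>\<omega>. real (X 0 \<omega>) \<partial>M)"
definition m2 where "m2 = (\<integral>\<omega>. (real (X 0 \<omega>))\<^sup>2 \<partial>M)"

lemma X0int: "integrable M (\<lambda>\<omega>. real (X 0 \<omega>))"
  by (rule square_integrable_imp_integrable[OF _ X2int]) simp

lemma Xint: "integrable M (\<lambda>\<omega>. real (X n \<omega>))"
  using int_pair[of "\<lambda>x s. real x" n] X0int by simp

lemma X2int_n: "integrable M (\<lambda>\<omega>. (real (X n \<omega>))\<^sup>2)"
  using int_pair[of "\<lambda>x s. (real x)\<^sup>2" n] X2int by simp

lemma p_pos: "p > 0" using ppos by (simp add: p_def)
lemma p_le1: "p \<le> 1" by (simp add: p_def)

lemma h_meas[measurable]: "(\<lambda>\<omega>. if S n \<omega> \<le> X n \<omega> then 1 else 0::real) \<in> borel_measurable M"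
  using pairF_meas[of "\<lambda>x s. if s \<le> x then 1 else 0" n] .

lemma h_int: "integrable M (\<lambda>\<omega>. if S n \<omega> \<le> X n \<omega> then 1 else 0::real)"
proof (rule integrable_const_bound[where B=1])
  show "AE \<omega> in M. norm (if S n \<omega> \<le> X n \<omega> then 1 else 0::real) \<le> 1" by (rule AE_I2) simp
qed (rule h_meas)

lemma h_exp: "(\<integral>\<omega>. (if S n \<omega> \<le> X n \<omega> then 1 else 0::real) \<partial>M) = p"
proof -
  have "(\<integral>\<omega>. (if S n \<omega> \<le> X n \<omega> then 1 else 0::real) \<partial>M) = (\<integral>\<omega>. (if S 0 \<omega> \<le> X 0 \<omega> then 1 else 0::real) \<partial>M)"
    using exp_pair[of "\<lambda>x s. if s \<le> x then 1 else 0" n] by simp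
  also have "\<dots> = (\<integral>\<omega>. indicator {\<omega>\<in>space M. S 0 \<omega> \<le> X 0 \<omega>} \<omega> \<partial>M)"
    by (rule Bochner_Integration.integral_cong) (auto simp: indicator_def)
  also have "\<dots> = p" unfolding p_def
    by (subst Bochner_Integration.integral_indicator) (rule arg_cong[where f="measure M"], auto)
  finally show ?thesis .
qed

lemma f_exp: "(\<integral>\<omega>. (if S n \<omega> \<le> X n \<omega> then 0 else 1::real) \<partial>M) = 1 - p"
proof -
  have e: "(\<lambda>\<omega>. (if S n \<omega> \<le> X n \<omega> then 0 else 1::real)) = (\<lambda>\<omega>. 1 - (if S n \<omega> \<le> X n \<omega> then 1 else 0))" by auto
  have "(\<integral>\<omega>. 1 - (if S n \<omega> \<le> X n \<omega> then 1 else 0::real) \<partial>M) = (\<integral>\<omega>. 1 \<partial>M) - (\<integral>\<omega>. (if S n \<omega> \<le> X n \<omega> then 1 else 0::real) \<partial>M)"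
    by (rule Bochner_Integration.integral_diff) (auto intro: h_int)
  then show ?thesis unfolding e h_exp by (simp add: prob_space)
qed

lemma aa_int2: "integrable M (\<lambda>\<omega>. (aa n \<omega>)\<^sup>2)"
proof (induction n)
  case 0 then show ?case by (simp add: aa_0)
next
  case (Suc n)
  show ?case
  proof (rule Bochner_Integration.integrable_bound)
    show "integrable M (\<lambda>\<omega>. 2 * (real (X n \<omega>))\<^sup>2 + 2 * (aa n \<omega>)\<^sup>2)"
      using Suc X2int_n by simp
    show "AE \<omega> in M. norm ((aa (Suc n) \<omega>)\<^sup>2) \<le> norm (2 * (real (X n \<omega>))\<^sup>2 + 2 * (aa n \<omega>)\<^sup>2)"
    proof (rule AE_I2)
      fix \<omega> assume \<omega>: "\<omega> \<in> space M"
      have a1: "1 \<le> aa n \<omega>" by (rule aa_ge1[OF \<omega>])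
      have "(aa (Suc n) \<omega>)\<^sup>2 \<le> 2 * (real (X n \<omega>))\<^sup>2 + 2 * (aa n \<omega>)\<^sup>2"
      proof (cases "S n \<omega> \<le> X n \<omega>")
        case True then show ?thesis by (simp add: aa_rec)
      next
        case False
        have "(real (X n \<omega>) + aa n \<omega>)\<^sup>2 \<le> 2 * (real (X n \<omega>))\<^sup>2 + 2 * (aa n \<omega>)\<^sup>2"
          by (rule sq_sum_le)
        then show ?thesis using False by (simp add: aa_rec)
      qed
      then show "norm ((aa (Suc n) \<omega>)\<^sup>2) \<le> norm (2 * (real (X n \<omega>))\<^sup>2 + 2 * (aa n \<omega>)\<^sup>2)" by simp
    qed
  qed simp
qed

lemma aa_int: "integrable M (aa n)"
proof (rule Bochner_Integration.integrable_bound[OF aa_int2[of n]])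
  show "AE \<omega> in M. norm (aa n \<omega>) \<le> norm ((aa n \<omega>)\<^sup>2)"
  proof (rule AE_I2)
    fix \<omega> assume "\<omega> \<in> space M"
    then have a1: "1 \<le> aa n \<omega>" by (rule aa_ge1)
    then have "aa n \<omega> * 1 \<le> aa n \<omega> * aa n \<omega>" by (intro mult_left_mono) auto
    then show "norm (aa n \<omega>) \<le> norm ((aa n \<omega>)\<^sup>2)" using a1 by (simp add: power2_eq_square)
  qed
qed simp

lemma indep_a_pt:
  fixes F :: "nat \<Rightarrow> nat \<Rightarrow> real" and G :: "real \<Rightarrow> real"
  assumes "integrable M (\<lambda>\<omega>. G (aa n \<omega>))" and "integrable M (\<lambda>\<omega>. F (X n \<omega>) (S n \<omega>))"
  shows "integrable M (\<lambda>\<omega>. G (aa n \<omega>) * F (X n \<omega>) (S n \<omega>))"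
    and "(\<integral>\<omega>. G (aa n \<omega>) * F (X n \<omega>) (S n \<omega>) \<partial>M) = (\<integral>\<omega>. G (aa n \<omega>) \<partial>M) * (\<integral>\<omega>. F (X n \<omega>) (S n \<omega>) \<partial>M)"
proof -
  have l1: "local_on {..<n} (\<lambda>z. G (Az n z))" by (rule local_on_comp1[OF Az_local])
  have l2: "local_on {n} (\<lambda>z. F (z (Inl n)) (z (Inr n)))" by (rule local_on_pt) simp
  note r = indep_split[OF l1 l2]
  show "integrable M (\<lambda>\<omega>. G (aa n \<omega>) * F (X n \<omega>) (S n \<omega>))" using r(1) assms by simp
  show "(\<integral>\<omega>. G (aa n \<omega>) * F (X n \<omega>) (S n \<omega>) \<partial>M) = (\<integral>\<omega>. G (aa n \<omega>) \<partial>M) * (\<integral>\<omega>. F (X n \<omega>) (S n \<omega>) \<partial>M)"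
    using r(2) assms by simp
qed

definition ff where "ff n \<omega> = (if S n \<omega> \<le> X n \<omega> then 0 else 1::real)"

lemma ff_int: "integrable M (ff n)"
proof -
  have "integrable M (\<lambda>\<omega>. 1 - (if S n \<omega> \<le> X n \<omega> then 1 else 0::real))" using h_int by simp
  moreover have "(\<lambda>\<omega>. 1 - (if S n \<omega> \<le> X n \<omega> then 1 else 0::real)) = ff n" by (auto simp: ff_def)
  ultimately show ?thesis by simp
qed

lemma ff_exp: "(\<integral>\<omega>. ff n \<omega> \<partial>M) = 1 - p" using f_exp by (simp add: ff_def)

lemma xff_meas: "(\<lambda>\<omega>. real (X n \<omega>) * ff n \<omega>) \<in> borel_measurable M"
  using pairF_meas[of "\<lambda>x s. real x * (if s \<le> x then 0 else 1)" n] unfolding ff_def .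

lemma xff_int: "integrable M (\<lambda>\<omega>. real (X n \<omega>) * ff n \<omega>)"
proof (rule Bochner_Integration.integrable_bound[OF Xint xff_meas])
  show "AE \<omega> in M. norm (real (X n \<omega>) * ff n \<omega>) \<le> norm (real (X n \<omega>))"
    by (rule AE_I2) (simp add: ff_def)
qed

lemma xff_exp: "0 \<le> (\<integral>\<omega>. real (X n \<omega>) * ff n \<omega> \<partial>M) \<and> (\<integral>\<omega>. real (X n \<omega>) * ff n \<omega> \<partial>M) \<le> mx"
proof
  show "0 \<le> (\<integral>\<omega>. real (X n \<omega>) * ff n \<omega> \<partial>M)" by (rule integral_nonneg_AE) (simp add: ff_def)
  have "(\<integral>\<omega>. real (X n \<omega>) * ff n \<omega> \<partial>M) \<le> (\<integral>\<omega>. real (X n \<omega>) \<partial>M)"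
    by (rule integral_mono[OF xff_int Xint]) (simp add: ff_def)
  also have "\<dots> = mx" unfolding mx_def using exp_pair[of "\<lambda>x s. real x" n] by simp
  finally show "(\<integral>\<omega>. real (X n \<omega>) * ff n \<omega> \<partial>M) \<le> mx" .
qed

lemma mx_nonneg: "0 \<le> mx" unfolding mx_def by (rule integral_nonneg_AE) simp
lemma m2_eq: "(\<integral>\<omega>. (real (X n \<omega>))\<^sup>2 \<partial>M) = m2"
  unfolding m2_def using exp_pair[of "\<lambda>x s. (real x)\<^sup>2" n] by simp
lemma mx_eq: "(\<integral>\<omega>. real (X n \<omega>) \<partial>M) = mx"
  unfolding mx_def using exp_pair[of "\<lambda>x s. real x" n] by simp

definition A0 where "A0 = max 1 (mx / p)"
definition B0 where "B0 = max 1 ((m2 + 2 * mx * A0) / p)"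

lemma aa_rec2: "aa (Suc n) \<omega> = real (X n \<omega>) + aa n \<omega> * ff n \<omega>"
  by (simp add: aa_rec ff_def)

lemma Ea_bounds: "0 \<le> (\<integral>\<omega>. aa n \<omega> \<partial>M) \<and> (\<integral>\<omega>. aa n \<omega> \<partial>M) \<le> A0 \<and> (\<integral>\<omega>. (aa n \<omega>)\<^sup>2 \<partial>M) \<le> B0"
proof (induction n)
  case 0 then show ?case by (simp add: aa_0 prob_space A0_def B0_def)
next
  case (Suc n)
  have IH1: "0 \<le> (\<integral>\<omega>. aa n \<omega> \<partial>M)" and IH2: "(\<integral>\<omega>. aa n \<omega> \<partial>M) \<le> A0"
    and IH3: "(\<integral>\<omega>. (aa n \<omega>)\<^sup>2 \<partial>M) \<le> B0" using Suc by auto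
  have fi: "integrable M (\<lambda>\<omega>. ff n \<omega>)" using ff_int by simp
  have i1: "integrable M (\<lambda>\<omega>. aa n \<omega> * ff n \<omega>)"
    using indep_a_pt(1)[of "\<lambda>x. x" n "\<lambda>x s. if s \<le> x then 0 else 1"] aa_int fi by (simp add: ff_def)
  have e1: "(\<integral>\<omega>. aa n \<omega> * ff n \<omega> \<partial>M) = (\<integral>\<omega>. aa n \<omega> \<partial>M) * (1 - p)"
    using indep_a_pt(2)[of "\<lambda>x. x" n "\<lambda>x s. if s \<le> x then 0 else 1"] aa_int fi ff_exp by (simp add: ff_def)
  have i2: "integrable M (\<lambda>\<omega>. aa n \<omega> * (real (X n \<omega>) * ff n \<omega>))"
    using indep_a_pt(1)[of "\<lambda>x. x" n "\<lambda>x s. real x * (if s \<le> x then 0 else 1)"] aa_int xff_int by (simp add: ff_def)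
  have e2: "(\<integral>\<omega>. aa n \<omega> * (real (X n \<omega>) * ff n \<omega>) \<partial>M) = (\<integral>\<omega>. aa n \<omega> \<partial>M) * (\<integral>\<omega>. real (X n \<omega>) * ff n \<omega> \<partial>M)"
    using indep_a_pt(2)[of "\<lambda>x. x" n "\<lambda>x s. real x * (if s \<le> x then 0 else 1)"] aa_int xff_int by (simp add: ff_def)
  have i3: "integrable M (\<lambda>\<omega>. (aa n \<omega>)\<^sup>2 * ff n \<omega>)"
    using indep_a_pt(1)[of "\<lambda>x. x\<^sup>2" n "\<lambda>x s. if s \<le> x then 0 else 1"] aa_int2 fi by (simp add: ff_def)
  have e3: "(\<integral>\<omega>. (aa n \<omega>)\<^sup>2 * ff n \<omega> \<partial>M) = (\<integral>\<omega>. (aa n \<omega>)\<^sup>2 \<partial>M) * (1 - p)"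
    using indep_a_pt(2)[of "\<lambda>x. x\<^sup>2" n "\<lambda>x s. if s \<le> x then 0 else 1"] aa_int2 fi ff_exp by (simp add: ff_def)
  have E1: "(\<integral>\<omega>. aa (Suc n) \<omega> \<partial>M) = mx + (\<integral>\<omega>. aa n \<omega> \<partial>M) * (1 - p)"
    unfolding aa_rec2 using Xint i1 e1 mx_eq by (simp add: Bochner_Integration.integral_add)
  have sq: "(aa (Suc n) \<omega>)\<^sup>2 = (real (X n \<omega>))\<^sup>2 + 2 * (aa n \<omega> * (real (X n \<omega>) * ff n \<omega>)) + (aa n \<omega>)\<^sup>2 * ff n \<omega>" for \<omega>
    by (simp add: aa_rec2 ff_def power2_eq_square algebra_simps)
  have E2: "(\<integral>\<omega>. (aa (Suc n) \<omega>)\<^sup>2 \<partial>M) = m2 + 2 * ((\<integral>\<omega>. aa n \<omega> \<partial>M) * (\<integral>\<omega>. real (X n \<omega>) * ff n \<omega> \<partial>M)) + (\<integral>\<omega>. (aa n \<omega>)\<^sup>2 \<partial>M) * (1 - p)"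
    unfolding sq using X2int_n i2 i3 e2 e3 m2_eq by (simp add: Bochner_Integration.integral_add)
  have p0: "0 < p" "p \<le> 1" using p_pos p_le1 by auto
  have A0ge: "mx \<le> p * A0" using p0 by (simp add: A0_def field_simps max_def)
  have B0ge: "m2 + 2 * mx * A0 \<le> p * B0" using p0 by (simp add: B0_def field_simps max_def)
  have xe: "0 \<le> (\<integral>\<omega>. real (X n \<omega>) * ff n \<omega> \<partial>M)" "(\<integral>\<omega>. real (X n \<omega>) * ff n \<omega> \<partial>M) \<le> mx"
    using xff_exp by auto
  show ?case
  proof (intro conjI)
    show "0 \<le> (\<integral>\<omega>. aa (Suc n) \<omega> \<partial>M)" unfolding E1 using IH1 mx_nonneg p0 by simp
    have "(\<integral>\<omega>. aa n \<omega> \<partial>M) * (1 - p) \<le> A0 * (1 - p)" using IH2 p0 by (intro mult_right_mono) auto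
    then show "(\<integral>\<omega>. aa (Suc n) \<omega> \<partial>M) \<le> A0" unfolding E1 using A0ge by (simp add: algebra_simps)
    have "(\<integral>\<omega>. aa n \<omega> \<partial>M) * (\<integral>\<omega>. real (X n \<omega>) * ff n \<omega> \<partial>M) \<le> A0 * mx"
      using IH1 IH2 xe by (intro mult_mono) auto
    moreover have "(\<integral>\<omega>. (aa n \<omega>)\<^sup>2 \<partial>M) * (1 - p) \<le> B0 * (1 - p)" using IH3 p0 by (intro mult_right_mono) auto
    ultimately show "(\<integral>\<omega>. (aa (Suc n) \<omega>)\<^sup>2 \<partial>M) \<le> B0" unfolding E2 using B0ge by (simp add: algebra_simps)
  qed
qed

lemma Ea2_bound: "(\<integral>\<omega>. (aa n \<omega>)\<^sup>2 \<partial>M) \<le> B0" using Ea_bounds by auto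

end

locale orthF = model2 +
  fixes F :: "nat \<Rightarrow> nat \<Rightarrow> real"
  assumes F2: "integrable M (\<lambda>\<omega>. (F (X 0 \<omega>) (S 0 \<omega>))\<^sup>2)"
begin

definition c where "c = (\<integral>\<omega>. F (X 0 \<omega>) (S 0 \<omega>) \<partial>M)"
definition V where "V = (\<integral>\<omega>. (F (X 0 \<omega>) (S 0 \<omega>) - c)\<^sup>2 \<partial>M)"
definition gc where "gc n \<omega> = F (X n \<omega>) (S n \<omega>) - c"
definition dd where "dd n \<omega> = aa n \<omega> * gc n \<omega>"

lemma F_meas: "(\<lambda>\<omega>. F (X n \<omega>) (S n \<omega>)) \<in> borel_measurable M" by (rule pairF_meas)

lemma F_int: "integrable M (\<lambda>\<omega>. F (X n \<omega>) (S n \<omega>))"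
proof -
  have "integrable M (\<lambda>\<omega>. F (X 0 \<omega>) (S 0 \<omega>))"
    by (rule square_integrable_imp_integrable[OF F_meas F2])
  then show ?thesis using int_pair[of F n] by simp
qed

lemma gc_meas[measurable]: "gc n \<in> borel_measurable M"
  unfolding gc_def using F_meas by measurable

lemma gc_int: "integrable M (gc n)"
  unfolding gc_def using F_int by simp

lemma gc_mean: "(\<integral>\<omega>. gc n \<omega> \<partial>M) = 0"
proof -
  have "(\<integral>\<omega>. gc n \<omega> \<partial>M) = (\<integral>\<omega>. F (X n \<omega>) (S n \<omega>) \<partial>M) - c"
    unfolding gc_def using F_int by (simp add: prob_space)
  also have "(\<integral>\<omega>. F (X n \<omega>) (S n \<omega>) \<partial>M) = c" unfolding c_def by (rule exp_pair)
  finally show ?thesis by simp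
qed

lemma gc2_int: "integrable M (\<lambda>\<omega>. (gc n \<omega>)\<^sup>2)"
proof -
  have "integrable M (\<lambda>\<omega>. (F (X n \<omega>) (S n \<omega>))\<^sup>2)" using int_pair[of "\<lambda>x s. (F x s)\<^sup>2" n] F2 by simp
  then have "integrable M (\<lambda>\<omega>. (F (X n \<omega>) (S n \<omega>))\<^sup>2 - 2 * c * F (X n \<omega>) (S n \<omega>) + c\<^sup>2)"
    using F_int by simp
  moreover have "(\<lambda>\<omega>. (F (X n \<omega>) (S n \<omega>))\<^sup>2 - 2 * c * F (X n \<omega>) (S n \<omega>) + c\<^sup>2) = (\<lambda>\<omega>. (gc n \<omega>)\<^sup>2)"
    by (auto simp: gc_def power2_eq_square algebra_simps)
  ultimately show ?thesis by simp
qed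

lemma gc2_exp: "(\<integral>\<omega>. (gc n \<omega>)\<^sup>2 \<partial>M) = V"
  unfolding gc_def V_def using exp_pair[of "\<lambda>x s. (F x s - c)\<^sup>2" n] by simp

lemma V_nonneg: "0 \<le> V" unfolding V_def by simp

lemma dd_meas[measurable]: "dd n \<in> borel_measurable M" unfolding dd_def by measurable

lemma dd2: "integrable M (\<lambda>\<omega>. (dd n \<omega>)\<^sup>2) \<and> (\<integral>\<omega>. (dd n \<omega>)\<^sup>2 \<partial>M) \<le> B0 * V"
proof -
  have gi: "integrable M (\<lambda>\<omega>. (F (X n \<omega>) (S n \<omega>) - c)\<^sup>2)" using gc2_int unfolding gc_def .
  have eq: "(\<lambda>\<omega>. (dd n \<omega>)\<^sup>2) = (\<lambda>\<omega>. (aa n \<omega>)\<^sup>2 * (F (X n \<omega>) (S n \<omega>) - c)\<^sup>2)"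
    by (auto simp: dd_def gc_def power_mult_distrib)
  have i: "integrable M (\<lambda>\<omega>. (aa n \<omega>)\<^sup>2 * (F (X n \<omega>) (S n \<omega>) - c)\<^sup>2)"
    using indep_a_pt(1)[of "\<lambda>x. x\<^sup>2" n "\<lambda>x s. (F x s - c)\<^sup>2"] aa_int2 gi by simp
  have e: "(\<integral>\<omega>. (aa n \<omega>)\<^sup>2 * (F (X n \<omega>) (S n \<omega>) - c)\<^sup>2 \<partial>M) = (\<integral>\<omega>. (aa n \<omega>)\<^sup>2 \<partial>M) * V"
    using indep_a_pt(2)[of "\<lambda>x. x\<^sup>2" n "\<lambda>x s. (F x s - c)\<^sup>2"] aa_int2 gi gc2_exp[of n] by (simp add: gc_def)
  have "(\<integral>\<omega>. (aa n \<omega>)\<^sup>2 \<partial>M) * V \<le> B0 * V" using Ea2_bound V_nonneg by (intro mult_right_mono) auto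
  then show ?thesis unfolding eq using i e by simp
qed

lemma abs_prod_le: "\<bar>x * y\<bar> \<le> (x\<^sup>2 + y\<^sup>2) / 2" for x y :: real
proof -
  have "0 \<le> (\<bar>x\<bar> - \<bar>y\<bar>)\<^sup>2" by simp
  then show ?thesis by (simp add: power2_diff abs_mult power2_abs)
qed

lemma dd_cross:
  assumes nn: "n < n'"
  shows "integrable M (\<lambda>\<omega>. dd n \<omega> * dd n' \<omega>) \<and> (\<integral>\<omega>. dd n \<omega> * dd n' \<omega> \<partial>M) = 0"
proof -
  define \<Phi> where "\<Phi> z = Az n z * (F (z (Inl n)) (z (Inr n)) - c) * Az n' z" for z
  define \<Psi> where "\<Psi> z = F (z (Inl n')) (z (Inr n')) - c" for z
  have l1: "local_on {..<n'} \<Phi>"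
  proof -
    have a: "local_on {..<n'} (Az n)" by (rule local_on_mono[OF _ Az_local]) (use nn in auto)
    have b: "local_on {..<n'} (\<lambda>z. F (z (Inl n)) (z (Inr n)) - c)" by (rule local_on_pt) (use nn in auto)
    have "local_on {..<n'} (\<lambda>z. Az n z * (F (z (Inl n)) (z (Inr n)) - c))" by (rule local_on_comp2[OF a b])
    then show ?thesis unfolding \<Phi>_def by (rule local_on_comp2[OF _ Az_local])
  qed
  have l2: "local_on {n'} \<Psi>" unfolding \<Psi>_def by (rule local_on_pt) simp
  have Phi_eq: "(\<lambda>\<omega>. \<Phi> (zv \<omega>)) = (\<lambda>\<omega>. dd n \<omega> * aa n' \<omega>)" by (auto simp: \<Phi>_def dd_def gc_def)
  have Psi_eq: "(\<lambda>\<omega>. \<Psi> (zv \<omega>)) = gc n'" by (auto simp: \<Psi>_def gc_def)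
  have i1: "integrable M (\<lambda>\<omega>. dd n \<omega> * aa n' \<omega>)"
  proof (rule Bochner_Integration.integrable_bound)
    show "integrable M (\<lambda>\<omega>. ((dd n \<omega>)\<^sup>2 + (aa n' \<omega>)\<^sup>2) / 2)" using dd2[of n] aa_int2[of n'] by simp
    show "AE \<omega> in M. norm (dd n \<omega> * aa n' \<omega>) \<le> norm (((dd n \<omega>)\<^sup>2 + (aa n' \<omega>)\<^sup>2) / 2)"
      by (rule AE_I2) (use abs_prod_le in auto)
  qed simp
  have i1': "integrable M (\<lambda>\<omega>. \<Phi> (zv \<omega>))" using i1 Phi_eq by simp
  have i2': "integrable M (\<lambda>\<omega>. \<Psi> (zv \<omega>))" using gc_int Psi_eq by simp
  note r = indep_split[OF l1 l2 i1' i2']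
  have PP: "(\<lambda>\<omega>. \<Phi> (zv \<omega>) * \<Psi> (zv \<omega>)) = (\<lambda>\<omega>. dd n \<omega> * aa n' \<omega> * gc n' \<omega>)"
    by (auto simp: \<Phi>_def \<Psi>_def dd_def gc_def)
  have "integrable M (\<lambda>\<omega>. dd n \<omega> * aa n' \<omega> * gc n' \<omega>)" using r(1) unfolding PP .
  moreover have "(\<integral>\<omega>. dd n \<omega> * aa n' \<omega> * gc n' \<omega> \<partial>M) = 0"
    using r(2) gc_mean unfolding PP Psi_eq by simp
  moreover have "(\<lambda>\<omega>. dd n \<omega> * aa n' \<omega> * gc n' \<omega>) = (\<lambda>\<omega>. dd n \<omega> * dd n' \<omega>)" by (auto simp: dd_def)
  ultimately show ?thesis by simp
qed

lemma dd_prod: "integrable M (\<lambda>\<omega>. dd n \<omega> * dd n' \<omega>) \<and> (n \<noteq> n' \<longrightarrow> (\<integral>\<omega>. dd n \<omega> * dd n' \<omega> \<partial>M) = 0)"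
proof (cases n n' rule: linorder_cases)
  case less then show ?thesis using dd_cross by auto
next
  case equal then show ?thesis using dd2[of n] by (simp add: power2_eq_square)
next
  case greater then show ?thesis using dd_cross[of n' n] by (simp add: mult.commute)
qed

lemma dd_sum_sq: "integrable M (\<lambda>\<omega>. (\<Sum>n<N. dd n \<omega>)\<^sup>2) \<and> (\<integral>\<omega>. (\<Sum>n<N. dd n \<omega>)\<^sup>2 \<partial>M) \<le> real N * (B0 * V)"
proof -
  have eq: "(\<lambda>\<omega>. (\<Sum>n<N. dd n \<omega>)\<^sup>2) = (\<lambda>\<omega>. \<Sum>i<N. \<Sum>j<N. dd i \<omega> * dd j \<omega>)"
    by (auto simp: power2_eq_square sum_product)
  have int: "integrable M (\<lambda>\<omega>. \<Sum>i<N. \<Sum>j<N. dd i \<omega> * dd j \<omega>)"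
    using dd_prod by (intro Bochner_Integration.integrable_sum) auto
  have "(\<integral>\<omega>. (\<Sum>i<N. \<Sum>j<N. dd i \<omega> * dd j \<omega>) \<partial>M) = (\<Sum>i<N. \<Sum>j<N. \<integral>\<omega>. dd i \<omega> * dd j \<omega> \<partial>M)"
    using dd_prod by (simp add: Bochner_Integration.integral_sum Bochner_Integration.integrable_sum)
  also have "\<dots> = (\<Sum>i<N. \<integral>\<omega>. (dd i \<omega>)\<^sup>2 \<partial>M)"
  proof (rule sum.cong[OF refl])
    fix i assume i: "i \<in> {..<N}"
    have "(\<Sum>j<N. \<integral>\<omega>. dd i \<omega> * dd j \<omega> \<partial>M) = (\<Sum>j<N. if j = i then \<integral>\<omega>. dd i \<omega> * dd i \<omega> \<partial>M else 0)"
      by (rule sum.cong) (use dd_prod in auto)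
    also have "\<dots> = (\<integral>\<omega>. dd i \<omega> * dd i \<omega> \<partial>M)" using i by (subst sum.delta) auto
    finally show "(\<Sum>j<N. \<integral>\<omega>. dd i \<omega> * dd j \<omega> \<partial>M) = (\<integral>\<omega>. (dd i \<omega>)\<^sup>2 \<partial>M)" by (simp add: power2_eq_square)
  qed
  also have "\<dots> \<le> (\<Sum>i<N. B0 * V)" by (intro sum_mono) (use dd2 in auto)
  finally show ?thesis using int unfolding eq by simp
qed

lemma orth_sub:
  assumes a: "a > 1"
  shows "AE \<omega> in M. (\<lambda>j. (\<Sum>n<kseq a j. dd n \<omega>) / real (kseq a j)) \<longlonglongrightarrow> 0"
proof (rule ae_zero_of_summable_sq[OF prob_space_axioms])
  show "(\<lambda>\<omega>. (\<Sum>n<kseq a j. dd n \<omega>) / real (kseq a j)) \<in> borel_measurable M" for j by measurable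
  show "integrable M (\<lambda>\<omega>. ((\<Sum>n<kseq a j. dd n \<omega>) / real (kseq a j))\<^sup>2)" for j
    using dd_sum_sq by (simp add: power_divide)
  have EW: "(\<integral>\<omega>. ((\<Sum>n<kseq a j. dd n \<omega>) / real (kseq a j))\<^sup>2 \<partial>M) \<le> 2 * (B0 * V) * (1 / a) ^ j" for j
  proof -
    have k1: "1 \<le> real (kseq a j)" using kseq_ge1[of a j] a by simp
    have "(\<integral>\<omega>. ((\<Sum>n<kseq a j. dd n \<omega>) / real (kseq a j))\<^sup>2 \<partial>M) = (\<integral>\<omega>. (\<Sum>n<kseq a j. dd n \<omega>)\<^sup>2 \<partial>M) / (real (kseq a j))\<^sup>2"
      by (simp add: power_divide)
    also have "\<dots> \<le> real (kseq a j) * (B0 * V) / (real (kseq a j))\<^sup>2"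
      using dd_sum_sq by (intro divide_right_mono) auto
    also have "\<dots> = (B0 * V) * (1 / real (kseq a j))" using k1 by (simp add: power2_eq_square)
    also have "\<dots> \<le> (B0 * V) * (2 * (1 / a) ^ j)"
      using kseq_inv[OF a] V_nonneg by (intro mult_left_mono) (auto simp: B0_def)
    finally show ?thesis by simp
  qed
  have geo: "summable (\<lambda>j. 2 * (B0 * V) * (1 / a) ^ j)"
    using a by (intro summable_mult summable_geometric) auto
  show "summable (\<lambda>j. \<integral>\<omega>. ((\<Sum>n<kseq a j. dd n \<omega>) / real (kseq a j))\<^sup>2 \<partial>M)"
    by (rule summable_comparison_test[OF _ geo]) (use EW in auto)
qed

end

context model2
begin

lemma aa_over_n: "AE \<omega> in M. (\<lambda>N. aa N \<omega> / real N) \<longlonglongrightarrow> 0"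
proof (rule ae_zero_of_summable_sq[OF prob_space_axioms])
  show "(\<lambda>\<omega>. aa N \<omega> / real N) \<in> borel_measurable M" for N by measurable
  show "integrable M (\<lambda>\<omega>. (aa N \<omega> / real N)\<^sup>2)" for N using aa_int2[of N] by (simp add: power_divide)
  have EW: "(\<integral>\<omega>. (aa N \<omega> / real N)\<^sup>2 \<partial>M) \<le> B0 * inverse (real N ^ 2)" for N
  proof -
    have "(\<integral>\<omega>. (aa N \<omega> / real N)\<^sup>2 \<partial>M) = (\<integral>\<omega>. (aa N \<omega>)\<^sup>2 \<partial>M) / (real N)\<^sup>2" by (simp add: power_divide)
    also have "\<dots> \<le> B0 / (real N)\<^sup>2" using Ea2_bound by (intro divide_right_mono) auto
    finally show ?thesis by (simp add: divide_inverse)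
  qed
  have "summable (\<lambda>N. B0 * inverse (real N ^ 2))"
    by (intro summable_mult inverse_power_summable) simp
  then show "summable (\<lambda>N. \<integral>\<omega>. (aa N \<omega> / real N)\<^sup>2 \<partial>M)"
    by (rule summable_comparison_test[rotated]) (use EW in auto)
qed

lemma aa_identity:
  "(\<Sum>n<N. aa n \<omega> * (if S n \<omega> \<le> X n \<omega> then 1 else 0)) = (\<Sum>n<N. real (X n \<omega>)) + 1 - aa N \<omega>"
proof -
  have "(\<Sum>n<N. aa n \<omega> * (if S n \<omega> \<le> X n \<omega> then 1 else 0)) = (\<Sum>n<N. real (X n \<omega>) + (aa n \<omega> - aa (Suc n) \<omega>))"
    by (rule sum.cong) (auto simp: aa_rec)
  also have "\<dots> = (\<Sum>n<N. real (X n \<omega>)) + (aa 0 \<omega> - aa N \<omega>)"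
    by (simp add: sum.distrib sum_lessThan_telescope'[of "\<lambda>n. aa n \<omega>" N])
  finally show ?thesis by (simp add: aa_0)
qed

lemma slln_X: "AE \<omega> in M. (\<lambda>n. (\<Sum>k<n. real (X k \<omega>)) / real n) \<longlonglongrightarrow> mx"
  using slln_fun[of "\<lambda>x s. x"] X0int by (simp add: mx_def)

lemma ah_tendsto: "AE \<omega> in M. (\<lambda>N. (\<Sum>n<N. aa n \<omega> * (if S n \<omega> \<le> X n \<omega> then 1 else 0)) / real N) \<longlonglongrightarrow> mx"
  using slln_X aa_over_n
proof eventually_elim
  case (elim \<omega>)
  have "(\<lambda>N. (\<Sum>n<N. real (X n \<omega>)) / real N + 1 / real N - aa N \<omega> / real N) \<longlonglongrightarrow> mx + 0 - 0"
    by (intro tendsto_intros elim lim_const_over_n)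
  moreover have "(\<Sum>n<N. real (X n \<omega>)) / real N + 1 / real N - aa N \<omega> / real N = (\<Sum>n<N. aa n \<omega> * (if S n \<omega> \<le> X n \<omega> then 1 else 0)) / real N" for N
    unfolding aa_identity by (simp add: add_divide_distrib diff_divide_distrib)
  ultimately show ?case by simp
qed

lemma aa_mono_sum: "\<omega> \<in> space M \<Longrightarrow> mono (\<lambda>N. \<Sum>n<N. aa n \<omega> * G n)" if "\<And>n. 0 \<le> G n" for G
proof -
  assume \<omega>: "\<omega> \<in> space M"
  have nn: "0 \<le> aa n \<omega>" for n using aa_ge1[OF \<omega>, of n] by simp
  show ?thesis by (intro monoI sum_mono2) (auto intro!: mult_nonneg_nonneg nn that)
qed

lemma R1: "AE \<omega> in M. (\<lambda>N. (\<Sum>n<N. aa n \<omega>) / real N) \<longlonglongrightarrow> mx / p"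
proof -
  have hsq: "(\<lambda>\<omega>. (if S 0 \<omega> \<le> X 0 \<omega> then 1 else 0::real)\<^sup>2) = (\<lambda>\<omega>. if S 0 \<omega> \<le> X 0 \<omega> then 1 else 0)"
    by (auto simp: fun_eq_iff)
  interpret O: orthF M X S "\<lambda>x s. if s \<le> x then 1 else 0"
    by unfold_locales (simp only: hsq h_int)
  have c: "O.c = p" unfolding O.c_def using h_exp[of 0] by simp
  have "AE \<omega> in M. \<forall>m. (\<lambda>j. (\<Sum>n<kseq (1 + 1 / real (Suc m)) j. O.dd n \<omega>) / real (kseq (1 + 1 / real (Suc m)) j)) \<longlonglongrightarrow> 0"
    by (subst AE_all_countable) (auto intro!: O.orth_sub)
  then show ?thesis using ah_tendsto AE_space
  proof eventually_elim
    case (elim \<omega>)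
    let ?h = "\<lambda>n. if S n \<omega> \<le> X n \<omega> then 1 else 0::real"
    show ?case
    proof (rule interp[where s="\<lambda>N. \<Sum>n<N. aa n \<omega>"])
      show "mono (\<lambda>N. \<Sum>n<N. aa n \<omega>)" using aa_mono_sum[of "\<lambda>_. 1" \<omega>] elim by simp
      show "0 \<le> (\<Sum>n<N. aa n \<omega>)" for N using aa_ge1[of \<omega>] elim by (intro sum_nonneg) (auto intro: order.trans[OF zero_le_one])
      fix m
      define a where "a = 1 + 1 / real (Suc m)"
      have a1: "a > 1" by (simp add: a_def)
      have d: "(\<lambda>j. (\<Sum>n<kseq a j. O.dd n \<omega>) / real (kseq a j)) \<longlonglongrightarrow> 0" using elim(1) by (simp add: a_def)
      have h: "(\<lambda>j. (\<Sum>n<kseq a j. aa n \<omega> * ?h n) / real (kseq a j)) \<longlonglongrightarrow> mx"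
        using filterlim_compose[OF elim(2) kseq_filterlim'[OF a1]] by simp
      have "(\<lambda>j. ((\<Sum>n<kseq a j. aa n \<omega> * ?h n) / real (kseq a j) - (\<Sum>n<kseq a j. O.dd n \<omega>) / real (kseq a j)) / p) \<longlonglongrightarrow> (mx - 0) / p"
        using p_pos by (intro tendsto_intros h d) auto
      moreover have "((\<Sum>n<kseq a j. aa n \<omega> * ?h n) / real (kseq a j) - (\<Sum>n<kseq a j. O.dd n \<omega>) / real (kseq a j)) / p
          = (\<Sum>n<kseq a j. aa n \<omega>) / real (kseq a j)" for j
      proof -
        have "(\<Sum>n<kseq a j. aa n \<omega> * ?h n) - (\<Sum>n<kseq a j. O.dd n \<omega>) = p * (\<Sum>n<kseq a j. aa n \<omega>)"
          unfolding O.dd_def O.gc_def c by (simp add: sum_subtractf[symmetric] sum_distrib_left algebra_simps)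
        then show ?thesis using p_pos by (simp add: diff_divide_distrib[symmetric] field_simps)
      qed
      ultimately show "(\<lambda>j. (\<Sum>n<kseq (1 + 1 / real (Suc m)) j. aa n \<omega>) / real (kseq (1 + 1 / real (Suc m)) j)) \<longlonglongrightarrow> mx / p"
        by (simp add: a_def)
    qed
  qed
qed

definition mm where "mm = (\<integral>\<omega>. real (min (X 0 \<omega>) (S 0 \<omega>)) \<partial>M)"

lemma R2: "AE \<omega> in M. (\<lambda>N. (\<Sum>n<N. aa n \<omega> * real (min (X n \<omega>) (S n \<omega>))) / real N) \<longlonglongrightarrow> mm * (mx / p)"
proof -
  have F2: "integrable M (\<lambda>\<omega>. (real (min (X 0 \<omega>) (S 0 \<omega>)))\<^sup>2)"
  proof (rule Bochner_Integration.integrable_bound[OF X2int])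
    show "(\<lambda>\<omega>. (real (min (X 0 \<omega>) (S 0 \<omega>)))\<^sup>2) \<in> borel_measurable M"
      using pairF_meas[of "\<lambda>x s. (real (min x s))\<^sup>2" 0] .
    show "AE \<omega> in M. norm ((real (min (X 0 \<omega>) (S 0 \<omega>)))\<^sup>2) \<le> norm ((real (X 0 \<omega>))\<^sup>2)"
      by (rule AE_I2) (auto intro!: power_mono)
  qed
  interpret O: orthF M X S "\<lambda>x s. real (min x s)"
    by unfold_locales (use F2 in simp)
  have c: "O.c = mm" unfolding O.c_def mm_def by simp
  have "AE \<omega> in M. \<forall>m. (\<lambda>j. (\<Sum>n<kseq (1 + 1 / real (Suc m)) j. O.dd n \<omega>) / real (kseq (1 + 1 / real (Suc m)) j)) \<longlonglongrightarrow> 0"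
    by (subst AE_all_countable) (auto intro!: O.orth_sub)
  then show ?thesis using R1 AE_space
  proof eventually_elim
    case (elim \<omega>)
    let ?m = "\<lambda>n. real (min (X n \<omega>) (S n \<omega>))"
    show ?case
    proof (rule interp[where s="\<lambda>N. \<Sum>n<N. aa n \<omega> * ?m n"])
      show "mono (\<lambda>N. \<Sum>n<N. aa n \<omega> * ?m n)" using aa_mono_sum[of ?m \<omega>] elim by simp
      show "0 \<le> (\<Sum>n<N. aa n \<omega> * ?m n)" for N using aa_ge1[of \<omega>] elim
        by (intro sum_nonneg mult_nonneg_nonneg) (auto intro: order.trans[OF zero_le_one])
      fix m
      define a where "a = 1 + 1 / real (Suc m)"
      have a1: "a > 1" by (simp add: a_def)
      have d: "(\<lambda>j. (\<Sum>n<kseq a j. O.dd n \<omega>) / real (kseq a j)) \<longlonglongrightarrow> 0" using elim(1) by (simp add: a_def)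
      have s: "(\<lambda>j. (\<Sum>n<kseq a j. aa n \<omega>) / real (kseq a j)) \<longlonglongrightarrow> mx / p"
        using filterlim_compose[OF elim(2) kseq_filterlim'[OF a1]] by simp
      have "(\<lambda>j. (\<Sum>n<kseq a j. O.dd n \<omega>) / real (kseq a j) + mm * ((\<Sum>n<kseq a j. aa n \<omega>) / real (kseq a j))) \<longlonglongrightarrow> 0 + mm * (mx / p)"
        by (intro tendsto_intros d s)
      moreover have "(\<Sum>n<kseq a j. O.dd n \<omega>) / real (kseq a j) + mm * ((\<Sum>n<kseq a j. aa n \<omega>) / real (kseq a j))
          = (\<Sum>n<kseq a j. aa n \<omega> * ?m n) / real (kseq a j)" for j
      proof -
        have "(\<Sum>n<kseq a j. O.dd n \<omega>) + mm * (\<Sum>n<kseq a j. aa n \<omega>) = (\<Sum>n<kseq a j. aa n \<omega> * ?m n)"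
          unfolding O.dd_def O.gc_def c by (simp add: sum_subtractf sum_distrib_left algebra_simps)
        then show ?thesis by (simp add: add_divide_distrib[symmetric])
      qed
      ultimately show "(\<lambda>j. (\<Sum>n<kseq (1 + 1 / real (Suc m)) j. aa n \<omega> * ?m n) / real (kseq (1 + 1 / real (Suc m)) j)) \<longlonglongrightarrow> mm * (mx / p)"
        by (simp add: a_def)
    qed
  qed
qed

end

lemma real_if0: "real (if c then a else 0) = (if c then real a else 0)" by simp

lemma div_both: "(c::real) \<noteq> 0 \<Longrightarrow> A / B = (A / c) / (B / c)"
  by (cases "B = 0") (simp_all add: field_simps)

lemma ereal_limsup_eq: "(f \<longlonglongrightarrow> L) \<Longrightarrow> limsup (\<lambda>T. ereal (f T)) = ereal L"
  by (rule lim_imp_Limsup[OF trivial_limit_sequentially]) (rule tendsto_ereal)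

context model
begin

lemma peak_main:
  assumes Xi: "integrable M (\<lambda>\<omega>. real (X 0 \<omega>))"
    and pos: "measure M {\<omega> \<in> space M. S 0 \<omega> \<le> X 0 \<omega>} > 0"
  shows "AE \<omega> in M. peak_age (\<lambda>n. X n \<omega>) (\<lambda>n. S n \<omega>) =
         ereal ((\<integral>\<omega>. real (X 0 \<omega>) \<partial>M) / measure M {\<omega> \<in> space M. S 0 \<omega> \<le> X 0 \<omega>}
              + (\<integral>\<omega>. (if S 0 \<omega> \<le> X 0 \<omega> then real (S 0 \<omega>) else 0) \<partial>M)
                  / measure M {\<omega> \<in> space M. S 0 \<omega> \<le> X 0 \<omega>}
              - 1)"
proof -
  define P where "P = measure M {\<omega> \<in> space M. S 0 \<omega> \<le> X 0 \<omega>}"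
  define MX where "MX = (\<integral>\<omega>. real (X 0 \<omega>) \<partial>M)"
  define ESH where "ESH = (\<integral>\<omega>. (if S 0 \<omega> \<le> X 0 \<omega> then real (S 0 \<omega>) else 0) \<partial>M)"
  have P0: "P > 0" using pos by (simp add: P_def)
  have l1: "AE \<omega> in M. (\<lambda>n. (\<Sum>k<n. real (X k \<omega>)) / real n) \<longlonglongrightarrow> MX"
    using slln_fun[of "\<lambda>x s. x"] Xi by (simp add: MX_def)
  have hi: "integrable M (\<lambda>\<omega>. real (if S 0 \<omega> \<le> X 0 \<omega> then 1 else 0::nat))"
  proof (rule integrable_const_bound[where B=1])
    show "AE \<omega> in M. norm (real (if S 0 \<omega> \<le> X 0 \<omega> then 1 else 0::nat)) \<le> 1" by (rule AE_I2) simp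
    show "(\<lambda>\<omega>. real (if S 0 \<omega> \<le> X 0 \<omega> then 1 else 0::nat)) \<in> borel_measurable M"
      using pairF_meas[of "\<lambda>x s. real (if s \<le> x then 1 else 0::nat)" 0] .
  qed
  have hP: "(\<integral>\<omega>. real (if S 0 \<omega> \<le> X 0 \<omega> then 1 else 0::nat) \<partial>M) = P"
  proof -
    have "(\<integral>\<omega>. real (if S 0 \<omega> \<le> X 0 \<omega> then 1 else 0::nat) \<partial>M) = (\<integral>\<omega>. indicator {\<omega>\<in>space M. S 0 \<omega> \<le> X 0 \<omega>} \<omega> \<partial>M)"
      by (rule Bochner_Integration.integral_cong) (auto simp: indicator_def)
    also have "\<dots> = P" unfolding P_def
      by (subst Bochner_Integration.integral_indicator) (rule arg_cong[where f="measure M"], auto)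
    finally show ?thesis .
  qed
  have l2: "AE \<omega> in M. (\<lambda>n. (\<Sum>k<n. if S k \<omega> \<le> X k \<omega> then 1 else 0::real) / real n) \<longlonglongrightarrow> P"
  proof -
    have e: "\<And>k \<omega>. real (if S k \<omega> \<le> X k \<omega> then 1 else 0::nat) = (if S k \<omega> \<le> X k \<omega> then 1 else 0::real)"
      by simp
    have hP': "(\<integral>\<omega>. (if S 0 \<omega> \<le> X 0 \<omega> then 1 else 0::real) \<partial>M) = P" using hP unfolding e .
    show ?thesis using slln_fun[of "\<lambda>x s. if s \<le> x then 1 else 0", OF hi] unfolding e hP' .
  qed
  have shi: "integrable M (\<lambda>\<omega>. real (if S 0 \<omega> \<le> X 0 \<omega> then S 0 \<omega> else 0))"
  proof (rule Bochner_Integration.integrable_bound[OF Xi])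
    show "(\<lambda>\<omega>. real (if S 0 \<omega> \<le> X 0 \<omega> then S 0 \<omega> else 0)) \<in> borel_measurable M"
      using pairF_meas[of "\<lambda>x s. real (if s \<le> x then s else 0)" 0] .
    show "AE \<omega> in M. norm (real (if S 0 \<omega> \<le> X 0 \<omega> then S 0 \<omega> else 0)) \<le> norm (real (X 0 \<omega>))"
      by (rule AE_I2) simp
  qed
  have l3: "AE \<omega> in M. (\<lambda>n. (\<Sum>k<n. real (if S k \<omega> \<le> X k \<omega> then S k \<omega> else 0)) / real n) \<longlonglongrightarrow> ESH"
  proof -
    have e: "\<And>k \<omega>. real (if S k \<omega> \<le> X k \<omega> then S k \<omega> else 0) = (if S k \<omega> \<le> X k \<omega> then real (S k \<omega>) else 0)"
      by simp
    show ?thesis using slln_fun[of "\<lambda>x s. if s \<le> x then s else 0", OF shi] unfolding e ESH_def .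
  qed
  have "AE \<omega> in M. peak_age (\<lambda>n. X n \<omega>) (\<lambda>n. S n \<omega>) = ereal (MX / P + ESH / P - 1)"
    using l1 l2 l3 AE_space
  proof eventually_elim
    case (elim \<omega>)
    interpret Q: sp "\<lambda>n. X n \<omega>" "\<lambda>n. S n \<omega>"
      by unfold_locales (use elim(4) X_pos S_pos in auto)
    define sx where "sx n = (\<Sum>k<n. real (X k \<omega>))" for n
    define sh where "sh n = (\<Sum>k<n. if S k \<omega> \<le> X k \<omega> then 1 else 0::real)" for n
    define ss where "ss n = (\<Sum>k<n. if S k \<omega> \<le> X k \<omega> then real (S k \<omega>) else 0)" for n
    have t1: "(\<lambda>n. sx n / real n) \<longlonglongrightarrow> MX" using elim(1) by (simp add: sx_def)
    have t2: "(\<lambda>n. sh n / real n) \<longlonglongrightarrow> P" using elim(2) by (simp add: sh_def)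
    have t3: "(\<lambda>n. ss n / real n) \<longlonglongrightarrow> ESH" 
    proof -
      have e3: "\<And>k. real (if S k \<omega> \<le> X k \<omega> then S k \<omega> else 0) = (if S k \<omega> \<le> X k \<omega> then real (S k \<omega>) else 0)"
        by simp
      show ?thesis using elim(3) unfolding e3 ss_def .
    qed
    have inf: "\<exists>i\<ge>K. S i \<omega> \<le> X i \<omega>" for K
    proof (rule ccontr)
      assume "\<not> (\<exists>i\<ge>K. S i \<omega> \<le> X i \<omega>)"
      then have no: "\<And>i. i \<ge> K \<Longrightarrow> \<not> S i \<omega> \<le> X i \<omega>" by auto
      have shK: "sh n = sh K" if "n \<ge> K" for n
      proof -
        have "sh n = sh K + (\<Sum>k\<in>{K..<n}. if S k \<omega> \<le> X k \<omega> then 1 else 0::real)"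
          unfolding sh_def lessThan_atLeast0 using that by (rule sum.atLeastLessThan_concat[symmetric, OF le0])
        also have "(\<Sum>k\<in>{K..<n}. if S k \<omega> \<le> X k \<omega> then 1 else 0::real) = 0"
          by (rule sum.neutral) (use no in auto)
        finally show ?thesis by simp
      qed
      have "eventually (\<lambda>n. sh K / real n = sh n / real n) sequentially"
        unfolding eventually_sequentially
      proof (intro exI[of _ K] allI impI)
        fix n assume "K \<le> n"
        then have "sh n = sh K" by (rule shK)
        then show "sh K / real n = sh n / real n" by (simp only:)
      qed
      with lim_const_over_n[of "sh K"] have "(\<lambda>n. sh n / real n) \<longlonglongrightarrow> 0"
        by (rule Lim_transform_eventually)
      with t2 have "P = 0" by (rule LIMSEQ_unique)
      then show False using P0 by simp
    qed
    have q: "(\<lambda>l. Q.qpk l) \<longlonglongrightarrow> MX / P + ESH / P - 1"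
    proof -
      have a: "(\<lambda>l. (sx l / real l) * (real l / real (Suc l))) \<longlonglongrightarrow> MX * 1"
        by (intro tendsto_intros t1 LIMSEQ_n_over_Suc_n)
      have b: "(\<lambda>l. ss (Suc l) / real (Suc l)) \<longlonglongrightarrow> ESH" using LIMSEQ_Suc[OF t3] .
      have c: "(\<lambda>l. sh (Suc l) / real (Suc l)) \<longlonglongrightarrow> P" using LIMSEQ_Suc[OF t2] .
      have d: "(\<lambda>l. 1 / real (Suc l)) \<longlonglongrightarrow> 0" using LIMSEQ_Suc[OF lim_const_over_n[of 1]] .
      have "(\<lambda>l. (1 / real (Suc l) + (sx l / real l) * (real l / real (Suc l)) + ss (Suc l) / real (Suc l) - sh (Suc l) / real (Suc l)) / (sh (Suc l) / real (Suc l)))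
             \<longlonglongrightarrow> (0 + MX * 1 + ESH - P) / P"
        using P0 by (intro tendsto_intros a b c d) auto
      moreover have "(1 / real (Suc l) + (sx l / real l) * (real l / real (Suc l)) + ss (Suc l) / real (Suc l) - sh (Suc l) / real (Suc l)) / (sh (Suc l) / real (Suc l))
          = Q.qpk l" for l
      proof -
        have e1: "(sx l / real l) * (real l / real (Suc l)) = sx l / real (Suc l)"
          by (cases "l = 0") (simp_all add: sx_def)
        have Yl: "real (gen_time (\<lambda>n. X n \<omega>) l) = 1 + sx l"
          by (simp add: gen_time_def sx_def)
        have "Q.qpk l = (1 + sx l + ss (Suc l) - sh (Suc l)) / sh (Suc l)"
          unfolding Q.qpk_def Yl by (simp add: ss_def sh_def)
        also have "\<dots> = ((1 + sx l + ss (Suc l) - sh (Suc l)) / real (Suc l)) / (sh (Suc l) / real (Suc l))"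
          by (rule div_both) simp
        also have "(1 + sx l + ss (Suc l) - sh (Suc l)) / real (Suc l) = 1 / real (Suc l) + sx l / real (Suc l) + ss (Suc l) / real (Suc l) - sh (Suc l) / real (Suc l)"
          by (simp add: add_divide_distrib diff_divide_distrib)
        finally show ?thesis using e1 by simp
      qed
      moreover have "(0 + MX * 1 + ESH - P) / P = MX / P + ESH / P - 1" using P0 by (simp add: field_simps)
      ultimately show ?thesis by simp
    qed
    have "peak_ratio (\<lambda>n. X n \<omega>) (\<lambda>n. S n \<omega>) \<longlonglongrightarrow> MX / P + ESH / P - 1"
      by (rule Q.peak_limit[OF inf q])
    then show ?case unfolding peak_age_def by (rule ereal_limsup_eq)
  qed
  then show ?thesis by (simp add: P_def MX_def ESH_def)
qed

end

context model2
begin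

lemma avg_main:
  "AE \<omega> in M. average_age (\<lambda>n. X n \<omega>) (\<lambda>n. S n \<omega>) =
         ereal (1/2 * ((\<integral>\<omega>. real (X 0 \<omega>) ^ 2 \<partial>M) / (\<integral>\<omega>. real (X 0 \<omega>) \<partial>M))
              + (\<integral>\<omega>. real (min (X 0 \<omega>) (S 0 \<omega>)) \<partial>M)
                  / measure M {\<omega> \<in> space M. S 0 \<omega> \<le> X 0 \<omega>}
              - 1/2)"
proof -
  have mx1: "1 \<le> mx"
  proof -
    have "(\<integral>\<omega>. 1 \<partial>M) \<le> (\<integral>\<omega>. real (X 0 \<omega>) \<partial>M)"
      by (rule integral_mono[OF _ X0int]) (use X_pos in auto)
    then show ?thesis by (simp add: mx_def prob_space)
  qed
  have lX2: "AE \<omega> in M. (\<lambda>n. (\<Sum>k<n. (real (X k \<omega>))\<^sup>2) / real n) \<longlonglongrightarrow> m2"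
  proof -
    have i: "integrable M (\<lambda>\<omega>. real (X 0 \<omega> * X 0 \<omega>))" using X2int by (simp add: power2_eq_square)
    have e: "\<And>k \<omega>. real (X k \<omega> * X k \<omega>) = (real (X k \<omega>))\<^sup>2" by (simp add: power2_eq_square)
    have m: "(\<integral>\<omega>. (real (X 0 \<omega>))\<^sup>2 \<partial>M) = m2" by (simp add: m2_def)
    show ?thesis using slln_fun[of "\<lambda>x s. x * x", OF i] unfolding e m .
  qed
  have "AE \<omega> in M. average_age (\<lambda>n. X n \<omega>) (\<lambda>n. S n \<omega>) = ereal (((m2 - mx) / 2 + mm * (mx / p)) / mx)"
    using slln_X lX2 R2 AE_space
  proof eventually_elim
    case (elim \<omega>)
    interpret Q: sp "\<lambda>n. X n \<omega>" "\<lambda>n. S n \<omega>"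
      by unfold_locales (use elim(4) X_pos S_pos in auto)
    have Bn_eq: "Q.Bn n = (real (X n \<omega>))\<^sup>2 / 2 - real (X n \<omega>) / 2 + aa n \<omega> * real (min (X n \<omega>) (S n \<omega>))" for n
      by (simp add: Q.Bn_def aa_def power2_eq_square right_diff_distrib diff_divide_distrib)
    have B: "(\<lambda>N. (\<Sum>n<N. Q.Bn n) / real N) \<longlonglongrightarrow> (m2 - mx) / 2 + mm * (mx / p)"
    proof -
      have "(\<lambda>N. ((\<Sum>k<N. (real (X k \<omega>))\<^sup>2) / real N - (\<Sum>k<N. real (X k \<omega>)) / real N) / 2
                + (\<Sum>n<N. aa n \<omega> * real (min (X n \<omega>) (S n \<omega>))) / real N) \<longlonglongrightarrow> (m2 - mx) / 2 + mm * (mx / p)"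
        by (intro tendsto_intros elim(1,2,3)) auto
      moreover have "((\<Sum>k<N. (real (X k \<omega>))\<^sup>2) / real N - (\<Sum>k<N. real (X k \<omega>)) / real N) / 2
                + (\<Sum>n<N. aa n \<omega> * real (min (X n \<omega>) (S n \<omega>))) / real N = (\<Sum>n<N. Q.Bn n) / real N" for N
        unfolding Bn_eq by (simp add: sum.distrib sum_subtractf sum_divide_distrib[symmetric] add_divide_distrib diff_divide_distrib)
      ultimately show ?thesis by simp
    qed
    have Yl: "(\<lambda>N. real (gen_time (\<lambda>n. X n \<omega>) N) / real N) \<longlonglongrightarrow> mx"
    proof -
      have "(\<lambda>N. 1 / real N + (\<Sum>k<N. real (X k \<omega>)) / real N) \<longlonglongrightarrow> 0 + mx"
        by (intro tendsto_intros elim(1) lim_const_over_n)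
      moreover have "1 / real N + (\<Sum>k<N. real (X k \<omega>)) / real N = real (gen_time (\<lambda>n. X n \<omega>) N) / real N" for N
        by (simp add: gen_time_def add_divide_distrib)
      ultimately show ?thesis by simp
    qed
    have "(\<lambda>T. Q.Ar T / real T) \<longlonglongrightarrow> ((m2 - mx) / 2 + mm * (mx / p)) / mx"
      by (rule Q.avg_limit[OF B Yl]) (use mx1 in simp)
    then show ?case unfolding average_age_def Q.Ar_def by (rule ereal_limsup_eq)
  qed
  moreover have "((m2 - mx) / 2 + mm * (mx / p)) / mx = 1/2 * (m2 / mx) + mm / p - 1/2"
    using mx1 p_pos by (simp add: field_simps)
  ultimately show ?thesis by (simp add: m2_def mx_def mm_def p_def)
qed

end

theorem theorem3:
  fixes M :: "'a measure" and X S :: "nat \<Rightarrow> 'a \<Rightarrow> nat"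
  assumes "prob_space M"
    and indep: "prob_space.indep_vars M (\<lambda>_. count_space UNIV)
                  (\<lambda>j. case j of Inl n \<Rightarrow> X n | Inr n \<Rightarrow> S n) UNIV"
    and X_id: "\<And>n. distr M (count_space UNIV) (X n) = distr M (count_space UNIV) (X 0)"
    and S_id: "\<And>n. distr M (count_space UNIV) (S n) = distr M (count_space UNIV) (S 0)"
    and X_pos: "\<And>n \<omega>. \<omega> \<in> space M \<Longrightarrow> X n \<omega> \<ge> 1"
    and S_pos: "\<And>n \<omega>. \<omega> \<in> space M \<Longrightarrow> S n \<omega> \<ge> 1"
    and pos: "measure M {\<omega> \<in> space M. S 0 \<omega> \<le> X 0 \<omega>} > 0"
  shows
   "(integrable M (\<lambda>\<omega>. real (X 0 \<omega>)) \<longrightarrow>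
      (AE \<omega> in M. peak_age (\<lambda>n. X n \<omega>) (\<lambda>n. S n \<omega>) =
         ereal ((\<integral>\<omega>. real (X 0 \<omega>) \<partial>M) / measure M {\<omega> \<in> space M. S 0 \<omega> \<le> X 0 \<omega>}
              + (\<integral>\<omega>. (if S 0 \<omega> \<le> X 0 \<omega> then real (S 0 \<omega>) else 0) \<partial>M)
                  / measure M {\<omega> \<in> space M. S 0 \<omega> \<le> X 0 \<omega>}
              - 1)))
  \<and> (integrable M (\<lambda>\<omega>. real (X 0 \<omega>) ^ 2) \<longrightarrow>
      (AE \<omega> in M. average_age (\<lambda>n. X n \<omega>) (\<lambda>n. S n \<omega>) =
         ereal (1/2 * ((\<integral>\<omega>. real (X 0 \<omega>) ^ 2 \<partial>M) / (\<integral>\<omega>. real (X 0 \<omega>) \<partial>M))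
              + (\<integral>\<omega>. real (min (X 0 \<omega>) (S 0 \<omega>)) \<partial>M)
                  / measure M {\<omega> \<in> space M. S 0 \<omega> \<le> X 0 \<omega>}
              - 1/2)))"
proof -
  interpret model M X S
    by (rule model.intro[OF assms(1)], unfold_locales) (use assms in auto)
  show ?thesis
  proof (intro conjI impI)
    assume "integrable M (\<lambda>\<omega>. real (X 0 \<omega>))"
    then show "AE \<omega> in M. peak_age (\<lambda>n. X n \<omega>) (\<lambda>n. S n \<omega>) =
         ereal ((\<integral>\<omega>. real (X 0 \<omega>) \<partial>M) / measure M {\<omega> \<in> space M. S 0 \<omega> \<le> X 0 \<omega>}
              + (\<integral>\<omega>. (if S 0 \<omega> \<le> X 0 \<omega> then real (S 0 \<omega>) else 0) \<partial>M)
                  / measure M {\<omega> \<in> space M. S 0 \<omega> \<le> X 0 \<omega>}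
              - 1)"
      by (rule peak_main[OF _ pos])
  next
    assume X2: "integrable M (\<lambda>\<omega>. real (X 0 \<omega>) ^ 2)"
    interpret model2 M X S
      by unfold_locales (use X2 pos in auto)
    show "AE \<omega> in M. average_age (\<lambda>n. X n \<omega>) (\<lambda>n. S n \<omega>) =
         ereal (1/2 * ((\<integral>\<omega>. real (X 0 \<omega>) ^ 2 \<partial>M) / (\<integral>\<omega>. real (X 0 \<omega>) \<partial>M))
              + (\<integral>\<omega>. real (min (X 0 \<omega>) (S 0 \<omega>)) \<partial>M)
                  / measure M {\<omega> \<in> space M. S 0 \<omega> \<le> X 0 \<omega>}
              - 1/2)"
      by (rule avg_main)
  qed
qed

end
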